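(* Let $d$ be a prime, $n\ge 1$, $0\le k\le n$, and let $L\subset\mathbb{F}_d^{2n}$ be a subspace with $L\subset L^{\perp}$ and $\dim L=n-k$. Fix hyperbolic pairs $(g_1,h_1),\dots,(g_n,h_n)$ adapted to $L$, a unit vector $\ket{\overline{0^n}}$, the resulting code subspaces $\mathcal{C}^{(s)}$, $s\in\mathbb{F}_d^{n-k}$, coset representatives $\hat{x}(t)$, $t\in\mathbb{F}_d^{n-k}$, and the maps $\mathcal{R}^{(s,t)}$, all as described in the context. Let $P_n$ be a probability distribution on $\mathbb{F}_d^{2n}$ and let $\mathcal{A}:\mathcal{B}(\mathcal{H}^{\otimes n})\to\mathcal{B}(\mathcal{H}^{\otimes n})$ be the channel $\sigma\mapsto\sum_{x\in\mathbb{F}_d^{2n}}P_n(x)N_x\sigma N_x^{\dagger}$. Then for all $s,t\in\mathbb{F}_d^{n-k}$, $$F_{\rm e}\big(\pi_{\mathcal{C}^{(s)}},\ \mathcal{R}^{(s,t)}\mathcal{A}\big)=P_n\big(\hat{x}(t)+L\big)=\sum_{x\in\hat{x}(t)+L}P_n(x).$$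
   Context: $\mathcal{H}$ is a Hilbert space of prime dimension $d$ with orthonormal basis $\ket{0},\dots,\ket{d-1}$ indexed by $\mathbb{F}_d=\mathbb{Z}/d\mathbb{Z}$; $\omega$ is a primitive $d$-th root of unity. Define unitaries $X\ket{a}=\ket{a-1}$, $Z\ket{a}=\omega^a\ket{a}$, and for $(a,b)\in\mathbb{F}_d^2$ put $N_{(a,b)}=i^{ab}X^aZ^b$ if $d=2$ (with $i=\sqrt{-1}$) and $N_{(a,b)}=X^aZ^b$ if $d>2$. Identify $((x_1,z_1),\dots,(x_n,z_n))$ with $y=(x_1,z_1,\dots,x_n,z_n)\in\mathbb{F}_d^{2n}$ and set $N_y=N_{(x_1,z_1)}\otimes\cdots\otimes N_{(x_n,z_n)}$ on $\mathcal{H}^{\otimes n}$. The symplectic form is $\langle y,y'\rangle=\sum_{i=1}^n(x_iz_i'-z_ix_i')$, and $L^{\perp}=\{y:\langle x,y\rangle=0\ \forall x\in L\}$. Hyperbolic pairs adapted to $L$: vectors $g_1,\dots,g_n,h_1,\dots,h_n\in\mathbb{F}_d^{2n}$ with $g_1,\dots,g_{n-k}$ a basis of $L$ and $\langle g_i,h_j\rangle=\delta_{ij}$, $\langle g_i,g_j\rangle=0$, $\langle h_i,h_j\rangle=0$ for all $i,j$. Let $\ket{\overline{0^n}}$ be a unit vector with $N_{g_i}\ket{\overline{0^n}}=\ket{\overline{0^n}}$ for $i=1,\dots,n$, and for $l\in\mathbb{F}_d^n$ let $\ket{\overline{l}}=\prod_{i=1}^n(N_{h_i})^{l_i}\ket{\overline{0^n}}$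 (these form an orthonormal basis of $\mathcal{H}^{\otimes n}$). For $s\in\mathbb{F}_d^{n-k}$, $\mathcal{C}^{(s)}=\mathrm{span}\{\ket{\overline{(s,u)}}:u\in\mathbb{F}_d^k\}$, $\Pi_s$ is the orthogonal projection onto $\mathcal{C}^{(s)}$, and $\pi_{\mathcal{C}^{(s)}}=\Pi_s/d^k$. For each $t\in\mathbb{F}_d^{n-k}$, $\hat{x}(t)$ is a chosen element of the coset $\{x\in\mathbb{F}_d^{2n}:\langle g_i,x\rangle=t_i,\ i=1,\dots,n-k\}$ of $L^{\perp}$. For $s,t\in\mathbb{F}_d^{n-k}$, $\mathcal{R}^{(s,t)}$ is the completely positive map $\sigma\mapsto R_t^{(s)}\sigma R_t^{(s)\dagger}$ with $R_t^{(s)}=N_{\hat{x}(t)}^{\dagger}\Pi_{t+s}$. $F_{\rm e}$ denotes the (unnormalized) entanglement fidelity: for a density operator $\rho$ and a completely positive map $\mathcal{E}$ with Kraus operators $E_j$, $F_{\rm e}(\rho,\mathcal{E})=\sum_j|\mathrm{tr}(\rho E_j)|^2$. Composition $\mathcal{M}\mathcal{L}$ means $\sigma\mapsto\mathcal{M}(\mathcal{L}(\sigma))$. *)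

theory Defs
  imports Complex_Main "HOL-Computational_Algebra.Primes"
begin

text \<open>Operators and vectors on a finite-dimensional Hilbert space with orthonormal
basis indexed by a finite set I: an operator is its matrix (entries indexed by I x I),
a vector its coordinate function on I.\<close>

type_synonym 'i op = "'i \<Rightarrow> 'i \<Rightarrow> complex"
type_synonym 'i vec = "'i \<Rightarrow> complex"

definition opmul :: "'i set \<Rightarrow> 'i op \<Rightarrow> 'i op \<Rightarrow> 'i op" where
  "opmul I A B = (\<lambda>r c. \<Sum>j\<in>I. A r j * B j c)"

definition opid :: "'i op" where
  "opid = (\<lambda>r c. if r = c then 1 else 0)"

fun oppow :: "'i set \<Rightarrow> 'i op \<Rightarrow> nat \<Rightarrow> 'i op" where
  "oppow I A 0 = opid"
| "oppow I A (Suc m) = opmul I A (oppow I A m)"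

definition opscale :: "complex \<Rightarrow> 'i op \<Rightarrow> 'i op" where
  "opscale a A = (\<lambda>r c. a * A r c)"

definition adj :: "'i op \<Rightarrow> 'i op" where
  "adj A = (\<lambda>r c. cnj (A c r))"

definition tr :: "'i set \<Rightarrow> 'i op \<Rightarrow> complex" where
  "tr I A = (\<Sum>j\<in>I. A j j)"

definition opapp :: "'i set \<Rightarrow> 'i op \<Rightarrow> 'i vec \<Rightarrow> 'i vec" where
  "opapp I A v = (\<lambda>r. \<Sum>j\<in>I. A r j * v j)"

definition vinner :: "'i set \<Rightarrow> 'i vec \<Rightarrow> 'i vec \<Rightarrow> complex" where
  "vinner I u v = (\<Sum>j\<in>I. cnj (u j) * v j)"

definition ketbra :: "'i vec \<Rightarrow> 'i vec \<Rightarrow> 'i op" where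
  "ketbra u v = (\<lambda>r c. u r * cnj (v c))"

definition opprod :: "'i set \<Rightarrow> 'i op list \<Rightarrow> 'i op" where
  "opprod I As = foldr (opmul I) As opid"

definition op_eq_on :: "'i set \<Rightarrow> 'i op \<Rightarrow> 'i op \<Rightarrow> bool" where
  "op_eq_on I A B \<longleftrightarrow> (\<forall>r\<in>I. \<forall>c\<in>I. A r c = B r c)"

text \<open>F_d^m: functions nat => nat with values in {0..<d} on {0..<m}, zero elsewhere.\<close>

definition Fvec :: "nat \<Rightarrow> nat \<Rightarrow> (nat \<Rightarrow> nat) set" where
  "Fvec d m = {v. (\<forall>i<m. v i < d) \<and> (\<forall>i\<ge>m. v i = 0)}"

definition vadd :: "nat \<Rightarrow> (nat \<Rightarrow> nat) \<Rightarrow> (nat \<Rightarrow> nat) \<Rightarrow> (nat \<Rightarrow> nat)" where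
  "vadd d u v = (\<lambda>i. (u i + v i) mod d)"

definition vsmul :: "nat \<Rightarrow> nat \<Rightarrow> (nat \<Rightarrow> nat) \<Rightarrow> (nat \<Rightarrow> nat)" where
  "vsmul d a v = (\<lambda>i. (a * v i) mod d)"

definition lincomb :: "nat \<Rightarrow> nat \<Rightarrow> (nat \<Rightarrow> nat) \<Rightarrow> (nat \<Rightarrow> nat \<Rightarrow> nat) \<Rightarrow> (nat \<Rightarrow> nat)" where
  "lincomb d m c g = (\<lambda>i. (\<Sum>j<m. c j * g j i) mod d)"

text \<open>y = (x_1,z_1,...,x_n,z_n) stored as x_i = y(2i), z_i = y(2i+1), i = 0..n-1.
Symplectic form sum_i (x_i z'_i - z_i x'_i) in F_d.\<close>
definition sympl :: "nat \<Rightarrow> nat \<Rightarrow> (nat \<Rightarrow> nat) \<Rightarrow> (nat \<Rightarrow> nat) \<Rightarrow> nat" where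
  "sympl d n y y' = nat ((\<Sum>i<n. int (y (2*i)) * int (y' (2*i+1))
                              - int (y (2*i+1)) * int (y' (2*i))) mod int d)"

text \<open>Single-qudit operators on basis {0..<d}: X|a> = |a-1>, Z|a> = omega^a |a>.\<close>
definition Xop :: "nat \<Rightarrow> nat op" where
  "Xop d = (\<lambda>r c. if r = (c + d - 1) mod d then 1 else 0)"

definition Zop :: "nat \<Rightarrow> complex \<Rightarrow> nat op" where
  "Zop d \<omega> = (\<lambda>r c. if r = c then \<omega> ^ c else 0)"

definition N1 :: "nat \<Rightarrow> complex \<Rightarrow> nat \<Rightarrow> nat \<Rightarrow> nat op" where
  "N1 d \<omega> a b = opscale (if d = 2 then \<i> ^ (a * b) else 1)
      (opmul {..<d} (oppow {..<d} (Xop d) a) (oppow {..<d} (Zop d \<omega>) b))"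

text \<open>N_y = N_(x_1,z_1) tensor ... tensor N_(x_n,z_n) on basis Fvec d n (tensor product
written in coordinates: matrix entries multiply).\<close>
definition Pauli :: "nat \<Rightarrow> complex \<Rightarrow> nat \<Rightarrow> (nat \<Rightarrow> nat) \<Rightarrow> (nat \<Rightarrow> nat) op" where
  "Pauli d \<omega> n y = (\<lambda>r c. \<Prod>i<n. N1 d \<omega> (y (2*i)) (y (2*i+1)) (r i) (c i))"

definition catv :: "nat \<Rightarrow> (nat \<Rightarrow> nat) \<Rightarrow> (nat \<Rightarrow> nat) \<Rightarrow> (nat \<Rightarrow> nat)" where
  "catv m s u = (\<lambda>i. if i < m then s i else u (i - m))"

definition ket :: "nat \<Rightarrow> complex \<Rightarrow> nat \<Rightarrow> (nat \<Rightarrow> nat \<Rightarrow> nat) \<Rightarrow> (nat \<Rightarrow> nat) vec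
                   \<Rightarrow> (nat \<Rightarrow> nat) \<Rightarrow> (nat \<Rightarrow> nat) vec" where
  "ket d \<omega> n h \<psi>0 l = opapp (Fvec d n)
      (opprod (Fvec d n) (map (\<lambda>i. oppow (Fvec d n) (Pauli d \<omega> n (h i)) (l i)) [0..<n])) \<psi>0"

text \<open>Projection Pi_s onto C^(s) = span {|(s,u)-bar> : u in F_d^k}, written as the sum of
rank-one projectors onto the (orthonormal) spanning vectors.\<close>
definition codeproj :: "nat \<Rightarrow> complex \<Rightarrow> nat \<Rightarrow> nat \<Rightarrow> (nat \<Rightarrow> nat \<Rightarrow> nat) \<Rightarrow> (nat \<Rightarrow> nat) vec
                        \<Rightarrow> (nat \<Rightarrow> nat) \<Rightarrow> (nat \<Rightarrow> nat) op" where
  "codeproj d \<omega> n k h \<psi>0 s = (\<lambda>r c. \<Sum>u\<in>Fvec d k.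
      ketbra (ket d \<omega> n h \<psi>0 (catv (n - k) s u)) (ket d \<omega> n h \<psi>0 (catv (n - k) s u)) r c)"

definition chanA :: "nat \<Rightarrow> complex \<Rightarrow> nat \<Rightarrow> ((nat \<Rightarrow> nat) \<Rightarrow> real)
                     \<Rightarrow> (nat \<Rightarrow> nat) op \<Rightarrow> (nat \<Rightarrow> nat) op" where
  "chanA d \<omega> n P \<sigma> = (\<lambda>r c. \<Sum>x\<in>Fvec d (2*n). complex_of_real (P x) *
      opmul (Fvec d n) (opmul (Fvec d n) (Pauli d \<omega> n x) \<sigma>) (adj (Pauli d \<omega> n x)) r c)"

definition Rop :: "nat \<Rightarrow> complex \<Rightarrow> nat \<Rightarrow> nat \<Rightarrow> (nat \<Rightarrow> nat \<Rightarrow> nat) \<Rightarrow> (nat \<Rightarrow> nat) vec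
                  \<Rightarrow> ((nat \<Rightarrow> nat) \<Rightarrow> (nat \<Rightarrow> nat)) \<Rightarrow> (nat \<Rightarrow> nat) \<Rightarrow> (nat \<Rightarrow> nat) \<Rightarrow> (nat \<Rightarrow> nat) op" where
  "Rop d \<omega> n k h \<psi>0 xhat s t = opmul (Fvec d n) (adj (Pauli d \<omega> n (xhat t)))
      (codeproj d \<omega> n k h \<psi>0 (vadd d t s))"

definition Rmap :: "nat \<Rightarrow> complex \<Rightarrow> nat \<Rightarrow> nat \<Rightarrow> (nat \<Rightarrow> nat \<Rightarrow> nat) \<Rightarrow> (nat \<Rightarrow> nat) vec
                  \<Rightarrow> ((nat \<Rightarrow> nat) \<Rightarrow> (nat \<Rightarrow> nat)) \<Rightarrow> (nat \<Rightarrow> nat) \<Rightarrow> (nat \<Rightarrow> nat)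
                  \<Rightarrow> (nat \<Rightarrow> nat) op \<Rightarrow> (nat \<Rightarrow> nat) op" where
  "Rmap d \<omega> n k h \<psi>0 xhat s t \<sigma> = opmul (Fvec d n)
      (opmul (Fvec d n) (Rop d \<omega> n k h \<psi>0 xhat s t) \<sigma>) (adj (Rop d \<omega> n k h \<psi>0 xhat s t))"

definition has_kraus :: "'i set \<Rightarrow> ('i op \<Rightarrow> 'i op) \<Rightarrow> ('j \<Rightarrow> 'i op) \<Rightarrow> 'j set \<Rightarrow> bool" where
  "has_kraus I E K J \<longleftrightarrow> finite J \<and>
     (\<forall>\<sigma>. op_eq_on I (E \<sigma>) (\<lambda>r c. \<Sum>j\<in>J. opmul I (opmul I (K j) \<sigma>) (adj (K j)) r c))"

definition Fe :: "'i set \<Rightarrow> 'i op \<Rightarrow> ('j \<Rightarrow> 'i op) \<Rightarrow> 'j set \<Rightarrow> real" where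
  "Fe I \<rho> K J = (\<Sum>j\<in>J. (cmod (tr I (opmul I \<rho> (K j))))^2)"

end

theory Submission
  imports Defs "Jordan_Normal_Form.Determinant" "HOL-Number_Theory.Cong"
begin

lemma Fvec_0: "Fvec d 0 = {(\<lambda>_. 0)}"
  by (auto simp: Fvec_def)

lemma Fvec_Suc: "Fvec d (Suc m) = (\<lambda>(v,p). v(m:=p)) ` (Fvec d m \<times> {..<d})"
proof
  show "Fvec d (Suc m) \<subseteq> (\<lambda>(v,p). v(m:=p)) ` (Fvec d m \<times> {..<d})"
  proof
    fix x assume x: "x \<in> Fvec d (Suc m)"
    have "x = (\<lambda>(v,p). v(m:=p)) (x(m:=0), x m)" by auto
    moreover have "(x(m:=0), x m) \<in> Fvec d m \<times> {..<d}"
      using x by (auto simp: Fvec_def less_Suc_eq)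
    ultimately show "x \<in> (\<lambda>(v,p). v(m:=p)) ` (Fvec d m \<times> {..<d})" by blast
  qed
next
  show "(\<lambda>(v,p). v(m:=p)) ` (Fvec d m \<times> {..<d}) \<subseteq> Fvec d (Suc m)"
    by (auto simp: Fvec_def less_Suc_eq)
qed

lemma inj_Fvec_Suc: "inj_on (\<lambda>(v,p). v(m:=p)) (Fvec d m \<times> {..<d})"
proof (rule inj_onI, clarify)
  fix v p v' p'
  assume v: "v \<in> Fvec d m" "v' \<in> Fvec d m" and eq: "v(m:=p) = v'(m:=p')"
  have "p = p'" using fun_cong[OF eq, of m] by simp
  moreover have "v = v'"
  proof
    fix i show "v i = v' i"
    proof (cases "i = m")
      case True then show ?thesis using v by (simp add: Fvec_def)
    next
      case False then show ?thesis using fun_cong[OF eq, of i] by simp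
    qed
  qed
  ultimately show "v = v' \<and> p = p'" by simp
qed

lemma finite_Fvec[simp]: "finite (Fvec d m)"
  by (induction m) (auto simp: Fvec_0 Fvec_Suc)

lemma sum_Fvec_Suc:
  "(\<Sum>x\<in>Fvec d (Suc m). F x) = (\<Sum>v\<in>Fvec d m. \<Sum>p<d. F (v(m:=p)))"
proof -
  have "sum F (Fvec d (Suc m)) = sum (F \<circ> (\<lambda>(v,p). v(m:=p))) (Fvec d m \<times> {..<d})"
    unfolding Fvec_Suc by (rule sum.reindex[OF inj_Fvec_Suc])
  then show ?thesis unfolding sum.cartesian_product by (simp add: split_def)
qed

lemma card_Fvec: "card (Fvec d m) = d ^ m"
proof (induction m)
  case 0 then show ?case by (simp add: Fvec_0)
next
  case (Suc m)
  have "card (Fvec d (Suc m)) = card (Fvec d m \<times> {..<d})"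
    unfolding Fvec_Suc by (rule card_image[OF inj_Fvec_Suc])
  then show ?case using Suc by (simp add: card_cartesian_product)
qed

lemma sum_prod_Fvec:
  fixes G :: "nat \<Rightarrow> nat \<Rightarrow> 'a::comm_semiring_1"
  shows "(\<Sum>v\<in>Fvec d m. \<Prod>i<m. G i (v i)) = (\<Prod>i<m. \<Sum>p<d. G i p)"
proof (induction m)
  case 0 then show ?case by (simp add: Fvec_0)
next
  case (Suc m)
  have "(\<Sum>v\<in>Fvec d (Suc m). \<Prod>i<Suc m. G i (v i))
      = (\<Sum>v\<in>Fvec d m. \<Sum>p<d. (\<Prod>i<m. G i (v i)) * G m p)"
    unfolding sum_Fvec_Suc
    by (intro sum.cong refl) (simp add: lessThan_Suc mult.commute)
  also have "\<dots> = (\<Sum>v\<in>Fvec d m. \<Prod>i<m. G i (v i)) * (\<Sum>p<d. G m p)"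
    by (rule sum_product[symmetric])
  finally show ?case using Suc by (simp add: lessThan_Suc mult.commute)
qed

lemma sum_prod_Fvec2:
  fixes G :: "nat \<Rightarrow> nat \<Rightarrow> nat \<Rightarrow> 'a::comm_semiring_1"
  shows "(\<Sum>x\<in>Fvec d (2*m). \<Prod>i<m. G i (x (2*i)) (x (2*i+1)))
       = (\<Prod>i<m. \<Sum>p<d. \<Sum>q<d. G i p q)"
proof (induction m)
  case 0 then show ?case by (simp add: Fvec_0)
next
  case (Suc m)
  have e: "2 * Suc m = Suc (Suc (2*m))" by simp
  have "(\<Sum>x\<in>Fvec d (2*Suc m). \<Prod>i<Suc m. G i (x (2*i)) (x (2*i+1)))
      = (\<Sum>v\<in>Fvec d (2*m). \<Sum>p<d. \<Sum>q<d. (\<Prod>i<m. G i (v (2*i)) (v (2*i+1))) * G m p q)"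
    unfolding e sum_Fvec_Suc
    by (intro sum.cong refl) (simp add: lessThan_Suc mult.commute)
  also have "\<dots> = (\<Sum>v\<in>Fvec d (2*m). \<Prod>i<m. G i (v (2*i)) (v (2*i+1))) * (\<Sum>p<d. \<Sum>q<d. G m p q)"
    by (subst sum_product) (simp only: sum_distrib_left)
  finally show ?case using Suc by (simp add: lessThan_Suc mult.commute)
qed

lemma opapp_opmul: "opapp I (opmul I A B) v r = opapp I A (opapp I B v) r"
  unfolding opapp_def opmul_def
  by (simp add: sum_distrib_left sum_distrib_right mult.assoc, subst sum.swap, simp)

lemma sum_delta_mult1: "finite I \<Longrightarrow> a \<in> I \<Longrightarrow> (\<Sum>p\<in>I. (if a = p then 1 else 0) * f p) = (f a :: 'a::comm_ring_1)"
proof -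
  assume a: "finite I" "a \<in> I"
  have "(\<Sum>p\<in>I. (if a = p then 1 else 0) * f p) = (\<Sum>p\<in>I. if a = p then f p else 0)" by (rule sum.cong) auto
  also have "\<dots> = f a" using a by simp
  finally show ?thesis .
qed

lemma sum_delta_mult2: "finite I \<Longrightarrow> a \<in> I \<Longrightarrow> (\<Sum>p\<in>I. f p * (if p = a then 1 else 0)) = (f a :: 'a::comm_ring_1)"
proof -
  assume a: "finite I" "a \<in> I"
  have "(\<Sum>p\<in>I. f p * (if p = a then 1 else 0)) = (\<Sum>p\<in>I. if a = p then f p else 0)" by (rule sum.cong) auto
  also have "\<dots> = f a" using a by simp
  finally show ?thesis .
qed

lemma opapp_opid: "finite I \<Longrightarrow> r \<in> I \<Longrightarrow> opapp I opid v r = v r"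
  unfolding opapp_def opid_def by (rule sum_delta_mult1)

lemma opapp_cong: "(\<And>j. j \<in> I \<Longrightarrow> v j = w j) \<Longrightarrow> opapp I A v r = opapp I A w r"
  unfolding opapp_def by simp

lemma opapp_scale: "opapp I A (\<lambda>j. c * v j) r = c * opapp I A v r"
  unfolding opapp_def by (simp add: sum_distrib_left mult_ac)

lemma vinner_adj: "vinner I v (opapp I (adj A) w) = vinner I (opapp I A v) w"
  unfolding vinner_def opapp_def adj_def
  by (simp add: sum_distrib_left sum_distrib_right mult_ac, subst sum.swap, simp)

lemma tr_ketbra_sum:
  "tr I (opmul I (\<lambda>r c. \<Sum>u\<in>U. ketbra (V u) (V u) r c) M)
       = (\<Sum>u\<in>U. vinner I (V u) (opapp I M (V u)))"
proof -
  have "tr I (opmul I (\<lambda>r c. \<Sum>u\<in>U. ketbra (V u) (V u) r c) M)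
      = (\<Sum>j\<in>I. \<Sum>m\<in>I. \<Sum>u\<in>U. V u j * cnj (V u m) * M m j)"
    unfolding tr_def opmul_def ketbra_def by (simp add: sum_distrib_right)
  also have "\<dots> = (\<Sum>u\<in>U. \<Sum>m\<in>I. \<Sum>j\<in>I. V u j * cnj (V u m) * M m j)"
    by (subst sum.swap, subst (2) sum.swap, subst sum.swap, simp)
  also have "\<dots> = (\<Sum>u\<in>U. vinner I (V u) (opapp I M (V u)))"
    unfolding vinner_def opapp_def by (simp add: sum_distrib_left mult_ac)
  finally show ?thesis .
qed

lemma opapp_ketbra_sum:
  "opapp I (\<lambda>r c. \<Sum>u\<in>U. ketbra (V u) (V u) r c) w r = (\<Sum>u\<in>U. V u r * vinner I (V u) w)"
  unfolding ketbra_def vinner_def opapp_def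
  by (simp add: sum_distrib_left sum_distrib_right mult_ac, subst sum.swap, simp)

lemma tr_opscale1: "tr I (opmul I (opscale c A) M) = c * tr I (opmul I A M)"
  unfolding tr_def opmul_def opscale_def by (simp add: sum_distrib_left mult_ac)

lemma tr_opscale2: "tr I (opmul I A (opscale c M)) = c * tr I (opmul I A M)"
  unfolding tr_def opmul_def opscale_def by (simp add: sum_distrib_left mult_ac)

lemma Fe_kraus:
  assumes kr: "has_kraus I E K J" and I: "finite I"
  shows "complex_of_real (Fe I \<rho> K J) =
    (\<Sum>c\<in>I. \<Sum>a\<in>I. \<Sum>e\<in>I. \<Sum>b\<in>I. \<rho> a b * (cnj (\<rho> c e) *
        E (\<lambda>p q. if p = a \<and> q = c then 1 else 0) b e))"
proof -
  have J: "finite J" using kr by (simp add: has_kraus_def)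
  have Ee: "E (\<lambda>p q. if p = a \<and> q = c then 1 else 0) b e = (\<Sum>j\<in>J. K j b a * cnj (K j e c))"
    if "a \<in> I" "b \<in> I" "c \<in> I" "e \<in> I" for a b c e
  proof -
    have "E (\<lambda>p q. if p = a \<and> q = c then 1 else 0) b e
        = (\<Sum>j\<in>J. opmul I (opmul I (K j) (\<lambda>p q. if p = a \<and> q = c then 1 else 0)) (adj (K j)) b e)"
      using kr that by (simp add: has_kraus_def op_eq_on_def)
    also have "\<dots> = (\<Sum>j\<in>J. K j b a * cnj (K j e c))"
    proof (rule sum.cong[OF refl])
      fix j
      have inner: "(\<Sum>p\<in>I. K j b p * (if p = a \<and> q = c then 1 else 0)) = (if q = c then K j b a else 0)" for q
        using that I by (cases "q = c") (simp_all add: sum_delta_mult2)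
      show "opmul I (opmul I (K j) (\<lambda>p q. if p = a \<and> q = c then 1 else 0)) (adj (K j)) b e = K j b a * cnj (K j e c)"
      proof -
        have "opmul I (opmul I (K j) (\<lambda>p q. if p = a \<and> q = c then 1 else 0)) (adj (K j)) b e
           = (\<Sum>q\<in>I. (if q = c then K j b a else 0) * cnj (K j e q))"
          by (simp only: opmul_def adj_def inner)
        also have "\<dots> = (\<Sum>q\<in>I. if c = q then K j b a * cnj (K j e q) else 0)"
          by (rule sum.cong) auto
        also have "\<dots> = K j b a * cnj (K j e c)" using that I by simp
        finally show ?thesis .
      qed
    qed
    finally show ?thesis .
  qed
  have "complex_of_real (Fe I \<rho> K J) = (\<Sum>j\<in>J. tr I (opmul I \<rho> (K j)) * cnj (tr I (opmul I \<rho> (K j))))"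
    unfolding Fe_def by (simp only: of_real_sum complex_norm_square)
  also have "\<dots> = (\<Sum>j\<in>J. \<Sum>c\<in>I. \<Sum>a\<in>I. \<Sum>e\<in>I. \<Sum>b\<in>I. \<rho> a b * (cnj (\<rho> c e) * (K j b a * cnj (K j e c))))"
    unfolding tr_def opmul_def
    by (simp only: sum_product sum_distrib_left sum_distrib_right cnj_sum complex_cnj_mult mult_ac)
  also have "\<dots> = (\<Sum>c\<in>I. \<Sum>a\<in>I. \<Sum>e\<in>I. \<Sum>b\<in>I. \<Sum>j\<in>J. \<rho> a b * (cnj (\<rho> c e) * (K j b a * cnj (K j e c))))"
    by (simp only: sum.swap[of _ J])
  also have "\<dots> = (\<Sum>c\<in>I. \<Sum>a\<in>I. \<Sum>e\<in>I. \<Sum>b\<in>I. \<rho> a b * (cnj (\<rho> c e) * (\<Sum>j\<in>J. K j b a * cnj (K j e c))))"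
    by (simp only: sum_distrib_left)
  also have "\<dots> = (\<Sum>c\<in>I. \<Sum>a\<in>I. \<Sum>e\<in>I. \<Sum>b\<in>I. \<rho> a b * (cnj (\<rho> c e) *
        E (\<lambda>p q. if p = a \<and> q = c then 1 else 0) b e))"
    by (intro sum.cong refl) (simp add: Ee)
  finally show ?thesis .
qed

lemma onb_complete:
  fixes V :: "'a \<Rightarrow> 'a \<Rightarrow> complex"
  assumes F: "finite F"
    and on: "\<And>l l'. l \<in> F \<Longrightarrow> l' \<in> F \<Longrightarrow> (\<Sum>r\<in>F. cnj (V l r) * V l' r) = (if l = l' then 1 else 0)"
    and r: "r \<in> F" and c: "c \<in> F"
  shows "(\<Sum>l\<in>F. V l r * cnj (V l c)) = (if r = c then 1 else 0)"
proof -
  define m where "m = card F"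
  obtain e where e: "bij_betw e {0..<m} F" using ex_bij_betw_nat_finite[OF F] m_def by blast
  define A where "A = mat m m (\<lambda>(i,j). cnj (V (e i) (e j)))"
  define B where "B = mat m m (\<lambda>(i,j). V (e j) (e i))"
  have Ac: "A \<in> carrier_mat m m" and Bc: "B \<in> carrier_mat m m" unfolding A_def B_def by auto
  have inj: "inj_on e {0..<m}" using e by (simp add: bij_betw_def)
  have img: "e ` {0..<m} = F" using e by (simp add: bij_betw_def)
  have sumF: "sum G F = sum (G \<circ> e) {0..<m}" for G :: "'a \<Rightarrow> complex"
    using sum.reindex[OF inj, of G] img by simp
  have eF: "e i \<in> F" if "i < m" for i using img that by auto
  have einj: "(e i = e j) = (i = j)" if "i < m" "j < m" for i j
    using inj that by (auto dest: inj_onD)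
  have AB: "(A * B) $$ (i, j) = (\<Sum>p\<in>{0..<m}. cnj (V (e i) (e p)) * V (e j) (e p))"
    if "i < m" "j < m" for i j
    using that Ac Bc unfolding A_def B_def by (simp add: scalar_prod_def)
  have BA: "(B * A) $$ (i, j) = (\<Sum>p\<in>{0..<m}. V (e p) (e i) * cnj (V (e p) (e j)))"
    if "i < m" "j < m" for i j
    using that Ac Bc unfolding A_def B_def by (simp add: scalar_prod_def)
  have "A * B = 1\<^sub>m m"
  proof (rule eq_matI)
    fix i j assume i: "i < dim_row (1\<^sub>m m)" and j: "j < dim_col (1\<^sub>m m)"
    then have i': "i < m" and j': "j < m" by auto
    have "(A * B) $$ (i, j) = (\<Sum>r\<in>F. cnj (V (e i) r) * V (e j) r)"
      unfolding AB[OF i' j'] sumF by (simp add: comp_def)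
    also have "\<dots> = (if e i = e j then 1 else 0)" by (rule on[OF eF[OF i'] eF[OF j']])
    also have "\<dots> = (if i = j then 1 else 0)" by (simp add: einj[OF i' j'])
    finally show "(A * B) $$ (i, j) = 1\<^sub>m m $$ (i, j)" using i' j' by simp
  next
    show "dim_row (A * B) = dim_row (1\<^sub>m m)" using Ac by simp
  next
    show "dim_col (A * B) = dim_col (1\<^sub>m m)" using Bc by simp
  qed
  then have BA1: "B * A = 1\<^sub>m m" by (rule mat_mult_left_right_inverse[OF Ac Bc])
  obtain i where i: "i < m" "r = e i" using r img by auto
  obtain j where j: "j < m" "c = e j" using c img by auto
  have "(\<Sum>l\<in>F. V l r * cnj (V l c)) = (\<Sum>p\<in>{0..<m}. V (e p) (e i) * cnj (V (e p) (e j)))"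
    unfolding sumF i j by (simp add: comp_def)
  also have "\<dots> = (B * A) $$ (i, j)" using BA[OF i(1) j(1)] by simp
  also have "\<dots> = (if i = j then 1 else 0)" using BA1 i j by simp
  also have "\<dots> = (if r = c then 1 else 0)" using einj[OF i(1) j(1)] i j by simp
  finally show ?thesis .
qed

definition Wp :: "complex \<Rightarrow> nat \<Rightarrow> int \<Rightarrow> complex" where
  "Wp \<omega> d m = \<omega> ^ nat (m mod int d)"

lemma mod_shift_inj:
  assumes "p < (d::nat)" "p' < d" "(a + p) mod d = (a + p') mod d"
  shows "p = p'"
proof -
  have "[a + p = a + p'] (mod d)" using assms(3) by (simp add: cong_def)
  then have "[p = p'] (mod d)" by (simp add: cong_add_lcancel_nat)
  then show ?thesis using assms(1,2) by (rule cong_less_modulus_unique_nat)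
qed

lemma sum_mod_shift:
  assumes "(d::nat) > 0"
  shows "(\<Sum>p<d. F ((a + p) mod d)) = (\<Sum>q<d. F q)"
proof -
  have inj: "inj_on (\<lambda>p. (a + p) mod d) {..<d}"
    by (rule inj_onI) (auto intro: mod_shift_inj)
  have "(\<lambda>p. (a + p) mod d) ` {..<d} = {..<d}"
    by (rule endo_inj_surj) (use assms inj in auto)
  then have "bij_betw (\<lambda>p. (a + p) mod d) {..<d} {..<d}"
    using inj by (simp add: bij_betw_def)
  then show ?thesis by (rule sum.reindex_bij_betw)
qed

locale qd =
  fixes d :: nat and \<omega> :: complex and n :: nat
  assumes d_prime: "prime d" and omega_root: "\<omega> ^ d = 1"
    and omega_prim: "\<forall>j. 0 < j \<and> j < d \<longrightarrow> \<omega> ^ j \<noteq> 1"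
begin

lemma d_gt1: "d > 1" using prime_gt_1_nat[OF d_prime] .
lemma d_pos: "d > 0" using d_gt1 by simp

lemma omega_mod: "\<omega> ^ (m mod d) = \<omega> ^ m"
proof -
  have "\<omega> ^ m = \<omega> ^ (m mod d + d * (m div d))" by simp
  also have "\<dots> = \<omega> ^ (m mod d) * (\<omega> ^ d) ^ (m div d)" by (simp only: power_add power_mult)
  finally show ?thesis using omega_root by simp
qed

abbreviation W where "W \<equiv> Wp \<omega> d"

lemma W_nat: "W (int m) = \<omega> ^ m"
  unfolding Wp_def by (simp add: zmod_int[symmetric] omega_mod del: of_nat_mod)

lemma W_cong: "[a = b] (mod int d) \<Longrightarrow> W a = W b"
  unfolding cong_def Wp_def by simp

lemma W_0: "W 0 = 1" by (simp add: Wp_def)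

lemma W_add: "W (a + b) = W a * W b"
proof -
  have "W (a + b) = W (a mod d + b mod d)"
    by (rule W_cong) (simp add: cong_def mod_add_eq)
  also have "a mod d + b mod d = int (nat (a mod d) + nat (b mod d))" using d_pos by simp
  also have "W \<dots> = \<omega> ^ (nat (a mod d) + nat (b mod d))" by (rule W_nat)
  also have "\<dots> = W a * W b" by (simp add: power_add Wp_def)
  finally show ?thesis .
qed

lemma norm_omega: "cmod \<omega> = 1"
proof -
  have "cmod \<omega> ^ d = 1 ^ d" using omega_root by (metis norm_one norm_power power_one)
  then show ?thesis by (rule power_eq_imp_eq_base) (use d_pos in auto)
qed

lemma omega_nz: "\<omega> \<noteq> 0" using norm_omega by auto

lemma norm_W: "cmod (W m) = 1" by (simp add: Wp_def norm_power norm_omega)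

lemma W_cnj: "cnj (W m) = W (- m)"
proof -
  have "W m * cnj (W m) = 1" using complex_norm_square[of "W m"] norm_W by simp
  moreover have "W m * W (- m) = 1" using W_add[of m "-m"] W_0 by simp
  ultimately show ?thesis by (metis mult.commute mult.left_commute mult.right_neutral)
qed

lemma omega_inj: assumes "a < d" "b < d" "\<omega> ^ a = \<omega> ^ b" shows "a = b"
proof (rule ccontr)
  assume ne: "a \<noteq> b"
  have gen: "x = y" if "x < d" "y < d" "x \<le> y" "\<omega> ^ x = \<omega> ^ y" for x y
  proof (rule ccontr)
    assume "x \<noteq> y"
    then have lt: "0 < y - x" "y - x < d" using that by auto
    have "\<omega> ^ y = \<omega> ^ x * \<omega> ^ (y - x)" using that(3) by (simp add: power_add[symmetric])
    then have "\<omega> ^ (y - x) = 1" using that(4) omega_nz by simp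
    then show False using omega_prim lt by blast
  qed
  show False
  proof (cases "a \<le> b")
    case True then show ?thesis using gen[of a b] assms ne by auto
  next
    case False then show ?thesis using gen[of b a] assms ne by auto
  qed
qed

lemma omega_eq_mod: "\<omega> ^ a = \<omega> ^ b \<Longrightarrow> a mod d = b mod d"
  using omega_inj[of "a mod d" "b mod d"] d_pos omega_mod by simp

lemma W_pow: "W (int q * m) = W m ^ q"
  by (induction q) (simp_all add: W_0 W_add algebra_simps)

lemma W_sum: "(\<Sum>q<d. W (int q * m)) = (if m mod int d = 0 then of_nat d else 0)"
proof (cases "m mod int d = 0")
  case True
  then have "W m = 1" using W_0 W_cong[of m 0] by (simp add: cong_def)
  then show ?thesis using True by (simp add: W_pow)
next
  case False
  have "W m = \<omega> ^ nat (m mod int d)" by (simp add: Wp_def)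
  moreover have "0 \<le> m mod int d" "m mod int d < int d" using d_pos by simp_all
  moreover have "0 < nat (m mod int d)" "nat (m mod int d) < d"
    using False calculation(2,3) by linarith+
  ultimately have ne: "W m \<noteq> 1" using omega_prim by auto
  have "W m ^ d = W (int d * m)" by (simp add: W_pow)
  also have "\<dots> = 1" using W_0 W_cong[of "int d * m" 0] by (simp add: cong_def)
  finally have "W m ^ d = 1" .
  then show ?thesis using False ne by (simp add: W_pow geometric_sum)
qed

end

context qd begin

abbreviation I where "I \<equiv> Fvec d n"

definition phi :: "nat \<Rightarrow> nat \<Rightarrow> complex" where
  "phi a b = (if d = 2 then \<i> ^ (a * b) else 1)"
definition Phi :: "(nat \<Rightarrow> nat) \<Rightarrow> complex" where
  "Phi y = (\<Prod>i<n. phi (y (2*i)) (y (2*i+1)))"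
definition sh :: "(nat \<Rightarrow> nat) \<Rightarrow> (nat \<Rightarrow> nat) \<Rightarrow> (nat \<Rightarrow> nat)" where
  "sh y r = (\<lambda>i. (r i + y (2*i)) mod d)"
definition zdot :: "(nat \<Rightarrow> nat) \<Rightarrow> (nat \<Rightarrow> nat) \<Rightarrow> nat" where
  "zdot y c = (\<Sum>i<n. y (2*i+1) * c i)"
definition Nv :: "(nat \<Rightarrow> nat) \<Rightarrow> ((nat \<Rightarrow> nat) \<Rightarrow> complex) \<Rightarrow> ((nat \<Rightarrow> nat) \<Rightarrow> complex)" where
  "Nv y v = opapp I (Pauli d \<omega> n y) v"

lemma norm_phi: "cmod (phi a b) = 1" by (simp add: phi_def norm_power)
lemma norm_Phi: "cmod (Phi y) = 1" by (simp add: Phi_def prod_norm[symmetric] norm_phi)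
lemma phi_cnj: "phi a b * cnj (phi a b) = 1"
  using complex_norm_square[of "phi a b"] norm_phi by simp
lemma Phi_cnj: "Phi y * cnj (Phi y) = 1"
  using complex_norm_square[of "Phi y"] norm_Phi by simp

lemma X_shift_eq:
  assumes j: "j < d" and r: "r < d"
  shows "(r = (j + d - 1) mod d) = ((r + 1) mod d = j)"
proof (cases "j = 0")
  case True
  have A: "(j + d - 1) mod d = d - 1" using True d_pos by simp
  show ?thesis
  proof (cases "r + 1 = d")
    case T2: True
    have B: "(r + 1) mod d = 0" using T2 by simp
    show ?thesis unfolding A B using T2 True by (intro iffI) linarith+
  next
    case F2: False
    have B: "(r + 1) mod d = r + 1" using F2 r by simp
    show ?thesis unfolding A B using F2 True r by (intro iffI) linarith+
  qed
next
  case False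
  have A: "(j + d - 1) mod d = j - 1"
  proof -
    have "j + d - 1 = (j - 1) + d" using False by simp
    then have "(j + d - 1) mod d = (j - 1) mod d" by simp
    also have "\<dots> = j - 1" using j by simp
    finally show ?thesis .
  qed
  show ?thesis
  proof (cases "r + 1 = d")
    case T2: True
    have B: "(r + 1) mod d = 0" using T2 by simp
    show ?thesis unfolding A B using T2 False j by (intro iffI) linarith+
  next
    case F2: False
    have B: "(r + 1) mod d = r + 1" using F2 r by simp
    show ?thesis unfolding A B using F2 False by (intro iffI) linarith+
  qed
qed

lemma Xpow: "r < d \<Longrightarrow> c < d \<Longrightarrow>
  oppow {..<d} (Xop d) a r c = (if (r + a) mod d = c then 1 else 0)"
proof (induction a arbitrary: r)
  case 0 then show ?case by (simp add: opid_def)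
next
  case (Suc a)
  have "oppow {..<d} (Xop d) (Suc a) r c
      = (\<Sum>j<d. (if r = (j + d - 1) mod d then 1 else 0) * oppow {..<d} (Xop d) a j c)"
    by (simp add: opmul_def Xop_def)
  also have "\<dots> = (\<Sum>j<d. (if (r + 1) mod d = j then 1 else 0) * (if (j + a) mod d = c then 1 else 0))"
  proof (rule sum.cong[OF refl])
    fix j assume "j \<in> {..<d}"
    then have jd: "j < d" by simp
    have e1: "oppow {..<d} (Xop d) a j c = (if (j + a) mod d = c then 1 else 0)"
      using Suc.IH[OF jd Suc.prems(2)] .
    have e2: "(r = (j + d - 1) mod d) = ((r + 1) mod d = j)" using X_shift_eq[OF jd Suc.prems(1)] .
    show "(if r = (j + d - 1) mod d then 1 else 0) * oppow {..<d} (Xop d) a j c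
        = (if (r + 1) mod d = j then 1 else 0) * (if (j + a) mod d = c then 1 else 0)"
      by (simp only: e1 e2)
  qed
  also have "\<dots> = (if ((r + 1) mod d + a) mod d = c then 1 else 0)"
    by (rule sum_delta_mult1) (use d_pos in auto)
  also have "((r + 1) mod d + a) mod d = (r + Suc a) mod d" by (simp add: mod_add_left_eq)
  finally show ?case .
qed

lemma Zpow: "r < d \<Longrightarrow> c < d \<Longrightarrow>
  oppow {..<d} (Zop d \<omega>) b r c = (if r = c then \<omega> ^ (b * c) else 0)"
proof (induction b arbitrary: r)
  case 0 then show ?case by (simp add: opid_def)
next
  case (Suc b)
  have "oppow {..<d} (Zop d \<omega>) (Suc b) r c
      = (\<Sum>j<d. (if r = j then 1 else 0) * (\<omega> ^ j * oppow {..<d} (Zop d \<omega>) b j c))"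
    by (simp only: oppow.simps opmul_def Zop_def) (intro sum.cong refl, simp)
  also have "\<dots> = \<omega> ^ r * oppow {..<d} (Zop d \<omega>) b r c"
    by (rule sum_delta_mult1) (use Suc.prems in auto)
  also have "\<dots> = (if r = c then \<omega> ^ (Suc b * c) else 0)"
    using Suc by (simp add: power_add)
  finally show ?case .
qed

lemma N1_entry: "r < d \<Longrightarrow> c < d \<Longrightarrow>
  N1 d \<omega> a b r c = phi a b * (if (r + a) mod d = c then \<omega> ^ (b * c) else 0)"
proof -
  assume r: "r < d" and c: "c < d"
  have "opmul {..<d} (oppow {..<d} (Xop d) a) (oppow {..<d} (Zop d \<omega>) b) r c
      = (\<Sum>j<d. (if (r + a) mod d = j then 1 else 0) * (if j = c then \<omega> ^ (b * c) else 0))"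
    unfolding opmul_def using r c Xpow Zpow by (intro sum.cong refl) auto
  also have "\<dots> = (if (r + a) mod d = c then \<omega> ^ (b * c) else 0)"
    by (rule sum_delta_mult1) (use d_pos in auto)
  finally show ?thesis by (simp add: N1_def opscale_def phi_def)
qed

lemma prod_if_zero:
  "(\<Prod>i<(m::nat). if P i then f i else (0::complex)) = (if (\<forall>i<m. P i) then (\<Prod>i<m. f i) else 0)"
proof (cases "\<forall>i<m. P i")
  case True then show ?thesis by simp
next
  case False
  then obtain i where i: "i < m" "\<not> P i" by auto
  have ex: "\<exists>a\<in>{..<m}. (if P a then f a else 0) = 0" using i by auto
  have "(\<Prod>i<m. if P i then f i else (0::complex)) = 0"
    by (rule prod_zero[OF finite_lessThan ex])
  then show ?thesis using False by simp
qed

lemma Fvec_eqI: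
  assumes a: "a \<in> Fvec d m" and b: "b \<in> Fvec d m" and e: "\<forall>i<m. a i = b i"
  shows "a = b"
proof (rule ext)
  fix i show "a i = b i"
  proof (cases "i < m")
    case True then show ?thesis using e by blast
  next
    case False
    have "a i = 0" using a False unfolding Fvec_def by simp
    moreover have "b i = 0" using b False unfolding Fvec_def by simp
    ultimately show ?thesis by simp
  qed
qed

lemma sh_in:
  assumes y: "y \<in> Fvec d (2*n)" and r: "r \<in> I"
  shows "sh y r \<in> I"
  unfolding Fvec_def mem_Collect_eq
proof (intro conjI allI impI)
  fix i assume "i < n"
  show "sh y r i < d" unfolding sh_def using d_pos by simp
next
  fix i assume i: "n \<le> i"
  have "r i = 0" using r i unfolding Fvec_def by simp
  moreover have "y (2*i) = 0" using y i unfolding Fvec_def by simp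
  ultimately show "sh y r i = 0" unfolding sh_def by simp
qed

lemma Pauli_entry:
  assumes y: "y \<in> Fvec d (2*n)" and r: "r \<in> I" and c: "c \<in> I"
  shows "Pauli d \<omega> n y r c = (if c = sh y r then Phi y * \<omega> ^ zdot y c else 0)"
proof -
  have rc: "r i < d" "c i < d" if "i < n" for i using r c that by (auto simp: Fvec_def)
  have "Pauli d \<omega> n y r c = (\<Prod>i<n. phi (y (2*i)) (y (2*i+1)) *
           (if (r i + y (2*i)) mod d = c i then \<omega> ^ (y (2*i+1) * c i) else 0))"
    unfolding Pauli_def using rc by (intro prod.cong refl) (simp add: N1_entry)
  also have "\<dots> = Phi y * (\<Prod>i<n. if (r i + y (2*i)) mod d = c i then \<omega> ^ (y (2*i+1) * c i) else 0)"
    by (simp add: prod.distrib Phi_def)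
  also have "(\<Prod>i<n. if (r i + y (2*i)) mod d = c i then \<omega> ^ (y (2*i+1) * c i) else 0)
      = (if (\<forall>i<n. (r i + y (2*i)) mod d = c i) then (\<Prod>i<n. \<omega> ^ (y (2*i+1) * c i)) else 0)"
    by (rule prod_if_zero)
  also have "(\<Prod>i<n. \<omega> ^ (y (2*i+1) * c i)) = \<omega> ^ zdot y c"
    unfolding zdot_def by (rule power_sum[symmetric])
  also have "(\<forall>i<n. (r i + y (2*i)) mod d = c i) = (c = sh y r)"
  proof
    assume "\<forall>i<n. (r i + y (2*i)) mod d = c i"
    then show "c = sh y r" using Fvec_eqI[OF c sh_in[OF y r]] by (simp add: sh_def)
  qed (simp add: sh_def)
  finally show ?thesis by simp
qed

lemma Nv_formula:
  assumes y: "y \<in> Fvec d (2*n)" and r: "r \<in> I"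
  shows "Nv y v r = Phi y * \<omega> ^ zdot y (sh y r) * v (sh y r)"
proof -
  have "Nv y v r = (\<Sum>c\<in>I. Pauli d \<omega> n y r c * v c)" by (simp add: Nv_def opapp_def)
  also have "\<dots> = (\<Sum>c\<in>I. if sh y r = c then Phi y * \<omega> ^ zdot y c * v c else 0)"
  proof (rule sum.cong[OF refl])
    fix c assume c: "c \<in> I"
    show "Pauli d \<omega> n y r c * v c = (if sh y r = c then Phi y * \<omega> ^ zdot y c * v c else 0)"
    proof (cases "c = sh y r")
      case True
      have "Pauli d \<omega> n y r c = Phi y * \<omega> ^ zdot y c" using Pauli_entry[OF y r c] True by simp
      then show ?thesis using True by simp
    next
      case False
      have "Pauli d \<omega> n y r c = 0" using Pauli_entry[OF y r c] False by simp
      then show ?thesis using False by auto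
    qed
  qed
  also have "\<dots> = Phi y * \<omega> ^ zdot y (sh y r) * v (sh y r)"
    using sh_in[OF y r] by (simp add: sum.delta')
  finally show ?thesis .
qed

lemma sh_bij: assumes y: "y \<in> Fvec d (2*n)" shows "bij_betw (sh y) I I"
proof -
  have inj: "inj_on (sh y) I"
  proof (rule inj_onI)
    fix a b assume a: "a \<in> I" and b: "b \<in> I" and e: "sh y a = sh y b"
    have "\<forall>i<n. a i = b i"
    proof (intro allI impI)
      fix i assume i: "i < n"
      have ai: "a i < d" using a i unfolding Fvec_def by simp
      have bi: "b i < d" using b i unfolding Fvec_def by simp
      have "(y (2*i) + a i) mod d = (y (2*i) + b i) mod d"
        using fun_cong[OF e, of i] unfolding sh_def by (simp only: add.commute)
      then show "a i = b i" by (rule mod_shift_inj[OF ai bi])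
    qed
    then show "a = b" by (rule Fvec_eqI[OF a b])
  qed
  have sub: "sh y ` I \<subseteq> I" using sh_in[OF y] by blast
  have "sh y ` I = I" by (rule endo_inj_surj[OF finite_Fvec sub inj])
  then show ?thesis using inj by (simp add: bij_betw_def)
qed

lemma vadd_in:
  assumes a: "a \<in> Fvec d m" and b: "b \<in> Fvec d m"
  shows "vadd d a b \<in> Fvec d m"
  unfolding Fvec_def mem_Collect_eq
proof (intro conjI allI impI)
  fix i assume "i < m"
  show "vadd d a b i < d" unfolding vadd_def using d_pos by simp
next
  fix i assume i: "m \<le> i"
  have "a i = 0" using a i unfolding Fvec_def by simp
  moreover have "b i = 0" using b i unfolding Fvec_def by simp
  ultimately show "vadd d a b i = 0" unfolding vadd_def by simp
qed

lemma sh_comp: "sh b (sh a r) = sh (vadd d a b) r"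
  unfolding sh_def vadd_def by (rule ext) (simp add: mod_add_left_eq mod_add_right_eq add.assoc)

lemma vadd_comm: "vadd d a b = vadd d b a"
  unfolding vadd_def by (simp add: add.commute)

lemma Nv_cong: "(\<And>j. j \<in> I \<Longrightarrow> v j = w j) \<Longrightarrow> Nv y v r = Nv y w r"
  unfolding Nv_def by (rule opapp_cong)

lemma Nv_scale: "Nv y (\<lambda>j. c * v j) r = c * Nv y v r"
  unfolding Nv_def by (rule opapp_scale)

end

context qd begin

lemma Nv_unitary:
  assumes y: "y \<in> Fvec d (2*n)"
  shows "vinner I (Nv y u) (Nv y v) = vinner I u v"
proof -
  have "vinner I (Nv y u) (Nv y v) = (\<Sum>r\<in>I. cnj (u (sh y r)) * v (sh y r))"
    unfolding vinner_def
  proof (rule sum.cong[OF refl])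
    fix r assume r: "r \<in> I"
    define al where "al = Phi y * \<omega> ^ zdot y (sh y r)"
    have n1: "cnj al * al = 1"
    proof -
      have "cmod al = 1" unfolding al_def by (simp add: norm_mult norm_Phi norm_power norm_omega)
      then show ?thesis using complex_norm_square[of al] by (simp add: mult.commute)
    qed
    have "cnj (Nv y u r) * Nv y v r = cnj (al * u (sh y r)) * (al * v (sh y r))"
      by (simp only: Nv_formula[OF y r] al_def)
    also have "\<dots> = (cnj al * al) * (cnj (u (sh y r)) * v (sh y r))" by (simp only: complex_cnj_mult mult_ac)
    finally show "cnj (Nv y u r) * Nv y v r = cnj (u (sh y r)) * v (sh y r)" by (simp only: n1 mult_1_left)
  qed
  also have "\<dots> = vinner I u v" unfolding vinner_def
    by (rule sum.reindex_bij_betw[OF sh_bij[OF y], of "\<lambda>r. cnj (u r) * v r"])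
  finally show ?thesis .
qed

lemma modc: "[int (x mod d) = int x] (mod int d)"
  by (simp add: cong_def zmod_int)

lemma zdot_cong:
  assumes "\<forall>i<n. [int (y (2*i+1)) = Y i] (mod int d)" "\<forall>i<n. [int (c i) = C i] (mod int d)"
  shows "[int (zdot y c) = (\<Sum>i<n. Y i * C i)] (mod int d)"
  unfolding zdot_def of_nat_sum of_nat_mult
proof (rule cong_sum, rule cong_mult)
  fix i assume "i \<in> {..<n}"
  then have i: "i < n" by simp
  show "[int (y (2*i+1)) = Y i] (mod int d)" using assms(1) i by blast
  show "[int (c i) = C i] (mod int d)" using assms(2) i by blast
qed

lemma sympl_cong:
  "[int (sympl d n a b) = (\<Sum>i<n. int (a (2*i)) * int (b (2*i+1)) - int (a (2*i+1)) * int (b (2*i)))] (mod int d)"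
proof -
  let ?X = "(\<Sum>i<n. int (a (2*i)) * int (b (2*i+1)) - int (a (2*i+1)) * int (b (2*i)))"
  have "int (sympl d n a b) = ?X mod int d" unfolding sympl_def using d_pos by simp
  then show ?thesis by (simp add: cong_def)
qed

lemma modc2: "[int ((x + y) mod d) = int x + int y] (mod int d)"
  using modc[of "x + y"] by simp

lemma modc3: "[int ((x + y + z) mod d) = int x + int y + int z] (mod int d)"
  using modc[of "x + y + z"] by simp

lemma shS: "sh (vadd d a b) r i = (r i + a (2*i) + b (2*i)) mod d"
  unfolding sh_def vadd_def by (simp add: mod_add_right_eq add.assoc)

lemma W_omega: "\<omega> ^ m = W (int m)" by (simp add: W_nat)

lemma Nv_two:
  assumes a: "a \<in> Fvec d (2*n)" and b: "b \<in> Fvec d (2*n)" and r: "r \<in> I"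
  shows "Nv a (Nv b v) r = Phi a * Phi b * (\<omega> ^ zdot a (sh a r) * \<omega> ^ zdot b (sh (vadd d a b) r))
            * v (sh (vadd d a b) r)"
proof -
  have "Nv a (Nv b v) r = Phi a * \<omega> ^ zdot a (sh a r) * Nv b v (sh a r)" by (rule Nv_formula[OF a r])
  also have "Nv b v (sh a r) = Phi b * \<omega> ^ zdot b (sh b (sh a r)) * v (sh b (sh a r))"
    by (rule Nv_formula[OF b sh_in[OF a r]])
  finally show ?thesis by (simp only: sh_comp mult_ac)
qed

lemma Nv_comm:
  assumes a: "a \<in> Fvec d (2*n)" and b: "b \<in> Fvec d (2*n)" and r: "r \<in> I"
  shows "Nv a (Nv b v) r = \<omega> ^ sympl d n a b * Nv b (Nv a v) r"
proof -
  define S where "S = sh (vadd d a b) r"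
  have SS: "sh (vadd d b a) r = S" unfolding S_def by (simp only: vadd_comm)
  have L: "Nv a (Nv b v) r = Phi a * Phi b * (\<omega> ^ zdot a (sh a r) * \<omega> ^ zdot b S) * v S"
    unfolding S_def by (rule Nv_two[OF a b r])
  have R: "Nv b (Nv a v) r = Phi a * Phi b * (\<omega> ^ zdot b (sh b r) * \<omega> ^ zdot a S) * v S"
    using Nv_two[OF b a r] unfolding SS by (simp only: mult_ac)
  define xa where "xa i = int (a (2*i))" for i
  define za where "za i = int (a (2*i+1))" for i
  define xb where "xb i = int (b (2*i))" for i
  define zb where "zb i = int (b (2*i+1))" for i
  define ri where "ri i = int (r i)" for i
  have c1: "[int (zdot a (sh a r)) = (\<Sum>i<n. za i * (ri i + xa i))] (mod int d)"
    by (rule zdot_cong) (simp_all add: za_def ri_def xa_def sh_def modc2)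
  have c2: "[int (zdot b S) = (\<Sum>i<n. zb i * (ri i + xa i + xb i))] (mod int d)"
    by (rule zdot_cong) (simp_all only: zb_def ri_def xa_def xb_def S_def shS modc3 cong_refl simp_thms)
  have c3: "[int (zdot b (sh b r)) = (\<Sum>i<n. zb i * (ri i + xb i))] (mod int d)"
    by (rule zdot_cong) (simp_all add: zb_def ri_def xb_def sh_def modc2)
  have c4: "[int (zdot a S) = (\<Sum>i<n. za i * (ri i + xa i + xb i))] (mod int d)"
    by (rule zdot_cong) (simp_all only: za_def ri_def xa_def xb_def S_def shS modc3 cong_refl simp_thms)
  have c5: "[int (sympl d n a b) = (\<Sum>i<n. xa i * zb i - za i * xb i)] (mod int d)"
    using sympl_cong[of a b] by (simp add: xa_def za_def xb_def zb_def)
  have alg: "(\<Sum>i<n. za i * (ri i + xa i)) + (\<Sum>i<n. zb i * (ri i + xa i + xb i))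
      = (\<Sum>i<n. xa i * zb i - za i * xb i) + ((\<Sum>i<n. zb i * (ri i + xb i)) + (\<Sum>i<n. za i * (ri i + xa i + xb i)))"
    unfolding sum.distrib[symmetric] by (rule sum.cong) (simp_all add: algebra_simps)
  have cc: "[int (zdot a (sh a r)) + int (zdot b S) = int (sympl d n a b) + (int (zdot b (sh b r)) + int (zdot a S))] (mod int d)"
  proof -
    have "[int (zdot a (sh a r)) + int (zdot b S) = (\<Sum>i<n. za i * (ri i + xa i)) + (\<Sum>i<n. zb i * (ri i + xa i + xb i))] (mod int d)"
      by (rule cong_add[OF c1 c2])
    moreover have "[int (sympl d n a b) + (int (zdot b (sh b r)) + int (zdot a S)) = (\<Sum>i<n. xa i * zb i - za i * xb i) + ((\<Sum>i<n. zb i * (ri i + xb i)) + (\<Sum>i<n. za i * (ri i + xa i + xb i)))] (mod int d)"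
      by (rule cong_add[OF c5 cong_add[OF c3 c4]])
    ultimately show ?thesis using alg by (simp add: cong_def)
  qed
  have E: "\<omega> ^ zdot a (sh a r) * \<omega> ^ zdot b S = \<omega> ^ sympl d n a b * (\<omega> ^ zdot b (sh b r) * \<omega> ^ zdot a S)"
    unfolding W_omega W_add[symmetric] by (rule W_cong[OF cc])
  show ?thesis unfolding L R E by (simp only: mult_ac)
qed

definition cPr :: "(nat \<Rightarrow> nat) \<Rightarrow> (nat \<Rightarrow> nat) \<Rightarrow> complex" where
  "cPr a b = Phi a * Phi b * cnj (Phi (vadd d a b)) * W (- (\<Sum>i<n. int (a (2*i+1)) * int (b (2*i))))"

lemma norm_cPr: "cmod (cPr a b) = 1"
  by (simp add: cPr_def norm_mult norm_Phi norm_W)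

lemma Nv_prod:
  assumes a: "a \<in> Fvec d (2*n)" and b: "b \<in> Fvec d (2*n)" and r: "r \<in> I"
  shows "Nv a (Nv b v) r = cPr a b * Nv (vadd d a b) v r"
proof -
  define S where "S = sh (vadd d a b) r"
  have L: "Nv a (Nv b v) r = Phi a * Phi b * (\<omega> ^ zdot a (sh a r) * \<omega> ^ zdot b S) * v S"
    unfolding S_def by (rule Nv_two[OF a b r])
  have R: "Nv (vadd d a b) v r = Phi (vadd d a b) * \<omega> ^ zdot (vadd d a b) S * v S"
    unfolding S_def by (rule Nv_formula[OF vadd_in[OF a b] r])
  define xa where "xa i = int (a (2*i))" for i
  define za where "za i = int (a (2*i+1))" for i
  define xb where "xb i = int (b (2*i))" for i
  define zb where "zb i = int (b (2*i+1))" for i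
  define ri where "ri i = int (r i)" for i
  have c1: "[int (zdot a (sh a r)) = (\<Sum>i<n. za i * (ri i + xa i))] (mod int d)"
    by (rule zdot_cong) (simp_all add: za_def ri_def xa_def sh_def modc2)
  have c2: "[int (zdot b S) = (\<Sum>i<n. zb i * (ri i + xa i + xb i))] (mod int d)"
    by (rule zdot_cong) (simp_all only: zb_def ri_def xa_def xb_def S_def shS modc3 cong_refl simp_thms)
  have c3: "[int (zdot (vadd d a b) S) = (\<Sum>i<n. (za i + zb i) * (ri i + xa i + xb i))] (mod int d)"
  proof (rule zdot_cong)
    have "vadd d a b (2*i+1) = (a (2*i+1) + b (2*i+1)) mod d" for i by (simp add: vadd_def)
    then show "\<forall>i<n. [int (vadd d a b (2*i+1)) = za i + zb i] (mod int d)"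
      by (simp only: za_def zb_def modc2 simp_thms)
    show "\<forall>i<n. [int (S i) = ri i + xa i + xb i] (mod int d)"
      by (simp only: ri_def xa_def xb_def S_def shS modc3 simp_thms)
  qed
  have alg: "(\<Sum>i<n. za i * (ri i + xa i)) + (\<Sum>i<n. zb i * (ri i + xa i + xb i))
      = - (\<Sum>i<n. za i * xb i) + (\<Sum>i<n. (za i + zb i) * (ri i + xa i + xb i))"
    unfolding sum.distrib[symmetric] sum_negf[symmetric] by (rule sum.cong) (simp_all add: algebra_simps)
  have cc: "[int (zdot a (sh a r)) + int (zdot b S) = - (\<Sum>i<n. za i * xb i) + int (zdot (vadd d a b) S)] (mod int d)"
  proof -
    have "[int (zdot a (sh a r)) + int (zdot b S) = (\<Sum>i<n. za i * (ri i + xa i)) + (\<Sum>i<n. zb i * (ri i + xa i + xb i))] (mod int d)"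
      by (rule cong_add[OF c1 c2])
    moreover have "[- (\<Sum>i<n. za i * xb i) + int (zdot (vadd d a b) S) = - (\<Sum>i<n. za i * xb i) + (\<Sum>i<n. (za i + zb i) * (ri i + xa i + xb i))] (mod int d)"
      by (rule cong_add[OF cong_refl c3])
    ultimately show ?thesis using alg by (simp add: cong_def)
  qed
  have E: "\<omega> ^ zdot a (sh a r) * \<omega> ^ zdot b S = W (- (\<Sum>i<n. za i * xb i)) * \<omega> ^ zdot (vadd d a b) S"
    unfolding W_omega W_add[symmetric] by (rule W_cong[OF cc])
  have P: "cnj (Phi (vadd d a b)) * Phi (vadd d a b) = 1" using Phi_cnj by (simp add: mult.commute)
  have "cPr a b * Nv (vadd d a b) v r
      = Phi a * Phi b * (cnj (Phi (vadd d a b)) * Phi (vadd d a b)) * (W (- (\<Sum>i<n. za i * xb i)) * \<omega> ^ zdot (vadd d a b) S) * v S"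
    unfolding R cPr_def za_def xb_def by (simp only: mult_ac)
  also have "\<dots> = Nv a (Nv b v) r" unfolding L E P by (simp only: mult_ac mult_1_left mult_1_right)
  finally show ?thesis by simp
qed

lemma zero_in: "(\<lambda>_. 0) \<in> Fvec d m" unfolding Fvec_def using d_pos by simp

lemma Nv_zero:
  assumes r: "r \<in> I" shows "Nv (\<lambda>_. 0) v r = v r"
proof -
  have P: "Phi (\<lambda>_. 0) = 1" unfolding Phi_def phi_def by simp
  have Z: "zdot (\<lambda>_. 0) c = 0" for c unfolding zdot_def by simp
  have S: "sh (\<lambda>_. 0) r = r"
  proof (rule ext)
    fix i show "sh (\<lambda>_. 0) r i = r i"
    proof (cases "i < n")
      case True then have "r i < d" using r unfolding Fvec_def by simp
      then show ?thesis unfolding sh_def by simp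
    next
      case False then have "r i = 0" using r unfolding Fvec_def by simp
      then show ?thesis unfolding sh_def by simp
    qed
  qed
  show ?thesis using Nv_formula[OF zero_in r, of v] unfolding P Z S by simp
qed

lemma int_diff_mod0: "b < d \<Longrightarrow> b2 < d \<Longrightarrow> ((int b - int b2) mod int d = 0) = (b = b2)"
proof -
  assume b: "b < d" and b2: "b2 < d"
  have "((int b - int b2) mod int d = 0) = ([int b = int b2] (mod int d))"
    by (simp add: cong_iff_dvd_diff dvd_eq_mod_eq_0)
  also have "\<dots> = [b = b2] (mod d)" by (rule cong_int_iff)
  also have "\<dots> = (b = b2)" using b b2 cong_less_modulus_unique_nat[of b b2 d] by (auto simp: cong_def)
  finally show ?thesis .
qed

lemma N1_pair:
  assumes a: "a < d" and b: "b < d" and a2: "a2 < d" and b2: "b2 < d"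
  shows "(\<Sum>p<d. \<Sum>q<d. N1 d \<omega> p q a b * cnj (N1 d \<omega> p q a2 b2)) = (if a = a2 \<and> b = b2 then of_nat d else 0)"
proof -
  have tm1: "N1 d \<omega> p q a b * cnj (N1 d \<omega> p q a2 b2)
      = (if (a + p) mod d = b \<and> (a2 + p) mod d = b2 then W (int q * (int b - int b2)) else 0)" for p q
  proof -
    have w: "\<omega> ^ (q * b) * cnj (\<omega> ^ (q * b2)) = W (int q * (int b - int b2))"
      unfolding W_omega W_cnj W_add[symmetric] by (simp add: algebra_simps)
    have "N1 d \<omega> p q a b * cnj (N1 d \<omega> p q a2 b2)
       = (phi p q * cnj (phi p q)) * ((if (a + p) mod d = b then \<omega> ^ (q * b) else 0) *
            cnj (if (a2 + p) mod d = b2 then \<omega> ^ (q * b2) else 0))"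
      unfolding N1_entry[OF a b] N1_entry[OF a2 b2] by (simp only: complex_cnj_mult mult_ac)
    also have "\<dots> = (if (a + p) mod d = b \<and> (a2 + p) mod d = b2 then W (int q * (int b - int b2)) else 0)"
      unfolding phi_cnj using w by simp
    finally show ?thesis .
  qed
  have inner: "(\<Sum>q<d. N1 d \<omega> p q a b * cnj (N1 d \<omega> p q a2 b2))
      = (if (a + p) mod d = b \<and> (a2 + p) mod d = b2 \<and> b = b2 then of_nat d else 0)" for p
  proof -
    have "(\<Sum>q<d. N1 d \<omega> p q a b * cnj (N1 d \<omega> p q a2 b2))
        = (if (a + p) mod d = b \<and> (a2 + p) mod d = b2 then (\<Sum>q<d. W (int q * (int b - int b2))) else 0)"
    proof -
      have gen: "(\<Sum>q<d. if P then f q else 0) = (if P then (\<Sum>q<d. f q) else (0::complex))" for P f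
        by (cases P) simp_all
      show ?thesis unfolding tm1 by (rule gen)
    qed
    also have "\<dots> = (if (a + p) mod d = b \<and> (a2 + p) mod d = b2 \<and> b = b2 then of_nat d else 0)"
      unfolding W_sum int_diff_mod0[OF b b2] by simp
    finally show ?thesis .
  qed
  show ?thesis
  proof (cases "b = b2")
    case False then show ?thesis unfolding inner by simp
  next
    case True
    show ?thesis
    proof (cases "a = a2")
      case True2: True
      have "(\<Sum>p<d. if (a + p) mod d = b \<and> (a2 + p) mod d = b2 \<and> b = b2 then of_nat d else 0)
          = (\<Sum>p<d. (\<lambda>q. if q = b then (of_nat d :: complex) else 0) ((a + p) mod d))"
        using True True2 by simp
      also have "\<dots> = (\<Sum>q<d. if q = b then (of_nat d :: complex) else 0)"
        by (rule sum_mod_shift[OF d_pos])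
      also have "\<dots> = of_nat d" using b by simp
      finally show ?thesis unfolding inner using True True2 by simp
    next
      case False2: False
      have nc: "\<not> ((a + p) mod d = b \<and> (a2 + p) mod d = b2)" for p
      proof
        assume h: "(a + p) mod d = b \<and> (a2 + p) mod d = b2"
        then have "(p + a) mod d = (p + a2) mod d" using True by (simp add: add.commute)
        then have "a = a2" by (rule mod_shift_inj[OF a a2])
        then show False using False2 by simp
      qed
      have z: "(\<Sum>p<d. if (a + p) mod d = b \<and> (a2 + p) mod d = b2 \<and> b = b2 then of_nat d else (0::complex)) = 0"
      proof (rule sum.neutral, rule ballI)
        fix p show "(if (a + p) mod d = b \<and> (a2 + p) mod d = b2 \<and> b = b2 then of_nat d else (0::complex)) = 0"
          using nc[of p] by (simp only: if_False conj_assoc[symmetric] simp_thms)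
      qed
      show ?thesis unfolding inner using False2 z by simp
    qed
  qed
qed

lemma Pauli_complete:
  assumes r: "r \<in> I" and c: "c \<in> I" and r2: "r2 \<in> I" and c2: "c2 \<in> I"
  shows "(\<Sum>x\<in>Fvec d (2*n). Pauli d \<omega> n x r c * cnj (Pauli d \<omega> n x r2 c2))
       = (if r = r2 \<and> c = c2 then of_nat d ^ n else 0)"
proof -
  have lt: "r i < d" "c i < d" "r2 i < d" "c2 i < d" if "i < n" for i
    using r c r2 c2 that unfolding Fvec_def by auto
  have "(\<Sum>x\<in>Fvec d (2*n). Pauli d \<omega> n x r c * cnj (Pauli d \<omega> n x r2 c2))
      = (\<Sum>x\<in>Fvec d (2*n). \<Prod>i<n. N1 d \<omega> (x (2*i)) (x (2*i+1)) (r i) (c i) *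
                                   cnj (N1 d \<omega> (x (2*i)) (x (2*i+1)) (r2 i) (c2 i)))"
    unfolding Pauli_def cnj_prod prod.distrib by simp
  also have "\<dots> = (\<Prod>i<n. \<Sum>p<d. \<Sum>q<d. N1 d \<omega> p q (r i) (c i) * cnj (N1 d \<omega> p q (r2 i) (c2 i)))"
    by (rule sum_prod_Fvec2)
  also have "\<dots> = (\<Prod>i<n. if r i = r2 i \<and> c i = c2 i then of_nat d else 0)"
    by (rule prod.cong[OF refl]) (simp add: N1_pair lt)
  also have "\<dots> = (if (\<forall>i<n. r i = r2 i \<and> c i = c2 i) then (\<Prod>i<n. of_nat d) else 0)"
    by (rule prod_if_zero)
  also have "(\<forall>i<n. r i = r2 i \<and> c i = c2 i) = (r = r2 \<and> c = c2)"
  proof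
    assume h: "\<forall>i<n. r i = r2 i \<and> c i = c2 i"
    show "r = r2 \<and> c = c2" using Fvec_eqI[OF r r2] Fvec_eqI[OF c c2] h by blast
  qed simp
  finally show ?thesis by simp
qed

end

context qd begin

lemma W_ne1: "x mod int d \<noteq> 0 \<Longrightarrow> W x \<noteq> 1"
proof -
  assume F: "x mod int d \<noteq> 0"
  have "0 \<le> x mod int d" "x mod int d < int d" using d_pos by simp_all
  then have "0 < nat (x mod int d)" "nat (x mod int d) < d" using F by linarith+
  then show ?thesis using omega_prim by (simp add: Wp_def)
qed

lemma vinner_cong: "(\<And>j. j \<in> A \<Longrightarrow> u j = u' j) \<Longrightarrow> (\<And>j. j \<in> A \<Longrightarrow> v j = v' j) \<Longrightarrow> vinner A u v = vinner A u' v'"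
  unfolding vinner_def by (rule sum.cong) simp_all

definition Pw :: "(nat \<Rightarrow> nat) \<Rightarrow> nat \<Rightarrow> ((nat \<Rightarrow> nat) \<Rightarrow> complex) \<Rightarrow> ((nat \<Rightarrow> nat) \<Rightarrow> complex)" where
  "Pw y m v = opapp I (oppow I (Pauli d \<omega> n y) m) v"

lemma Pw_Suc: "Pw y (Suc m) v = Nv y (Pw y m v)"
  by (rule ext) (simp only: Pw_def Nv_def oppow.simps opapp_opmul)

lemma Pw_0: "r \<in> I \<Longrightarrow> Pw y 0 v r = v r"
  by (simp only: Pw_def oppow.simps opapp_opid[OF finite_Fvec])

lemma Pw_cong: "(\<And>j. j \<in> I \<Longrightarrow> v j = w j) \<Longrightarrow> Pw y m v r = Pw y m w r"
  unfolding Pw_def by (rule opapp_cong)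

lemma Pw_scale: "Pw y m (\<lambda>j. c * v j) r = c * Pw y m v r"
  unfolding Pw_def by (rule opapp_scale)

lemma Nv_Pw_comm:
  assumes a: "a \<in> Fvec d (2*n)" and b: "b \<in> Fvec d (2*n)"
  shows "r \<in> I \<Longrightarrow> Nv a (Pw b m v) r = \<omega> ^ (m * sympl d n a b) * Pw b m (Nv a v) r"
proof (induction m arbitrary: r)
  case 0
  have "Nv a (Pw b 0 v) r = Nv a v r" by (rule Nv_cong) (simp add: Pw_0)
  then show ?case using 0 by (simp add: Pw_0)
next
  case (Suc m)
  have "Nv a (Pw b (Suc m) v) r = Nv a (Nv b (Pw b m v)) r" by (simp only: Pw_Suc)
  also have "\<dots> = \<omega> ^ sympl d n a b * Nv b (Nv a (Pw b m v)) r" by (rule Nv_comm[OF a b Suc.prems])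
  also have "Nv b (Nv a (Pw b m v)) r = Nv b (\<lambda>j. \<omega> ^ (m * sympl d n a b) * Pw b m (Nv a v) j) r"
    by (rule Nv_cong) (rule Suc.IH)
  also have "\<dots> = \<omega> ^ (m * sympl d n a b) * Nv b (Pw b m (Nv a v)) r" by (rule Nv_scale)
  also have "Nv b (Pw b m (Nv a v)) = Pw b (Suc m) (Nv a v)" by (simp only: Pw_Suc)
  finally show ?case by (simp add: power_add mult_ac)
qed

lemma Pw_unitary:
  assumes y: "y \<in> Fvec d (2*n)"
  shows "vinner I (Pw y m u) (Pw y m v) = vinner I u v"
proof (induction m)
  case 0 then show ?case by (rule vinner_cong) (simp_all add: Pw_0)
next
  case (Suc m) then show ?case by (simp only: Pw_Suc Nv_unitary[OF y])
qed

lemma orth: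
  assumes y: "y \<in> Fvec d (2*n)"
    and u: "\<And>r. r \<in> I \<Longrightarrow> Nv y u r = \<omega> ^ a * u r"
    and v: "\<And>r. r \<in> I \<Longrightarrow> Nv y v r = \<omega> ^ b * v r"
    and ne: "a mod d \<noteq> b mod d"
  shows "vinner I u v = 0"
proof -
  have "vinner I u v = vinner I (Nv y u) (Nv y v)" by (rule Nv_unitary[OF y, symmetric])
  also have "\<dots> = vinner I (\<lambda>r. \<omega> ^ a * u r) (\<lambda>r. \<omega> ^ b * v r)" by (rule vinner_cong) (simp_all add: u v)
  also have "\<dots> = (cnj (\<omega> ^ a) * \<omega> ^ b) * vinner I u v"
    unfolding vinner_def by (simp add: sum_distrib_left mult_ac)
  also have "cnj (\<omega> ^ a) * \<omega> ^ b = W (int b - int a)"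
    unfolding W_omega W_cnj W_add[symmetric] by simp
  finally have e: "vinner I u v = W (int b - int a) * vinner I u v" .
  have "(int b - int a) mod int d \<noteq> 0"
  proof
    assume "(int b - int a) mod int d = 0"
    then have "[int b = int a] (mod int d)" by (simp add: cong_iff_dvd_diff dvd_eq_mod_eq_0)
    then have "[b = a] (mod d)" by (simp add: cong_int_iff)
    then show False using ne by (simp add: cong_def)
  qed
  then have "W (int b - int a) \<noteq> 1" by (rule W_ne1)
  then show ?thesis using e by (metis mult_cancel_right2)
qed

end

locale qcode = qd +
  fixes k :: nat and g h :: "nat \<Rightarrow> nat \<Rightarrow> nat" and \<psi>0 :: "(nat \<Rightarrow> nat) \<Rightarrow> complex"
    and xhat :: "(nat \<Rightarrow> nat) \<Rightarrow> (nat \<Rightarrow> nat)" and s t :: "nat \<Rightarrow> nat"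
    and L :: "(nat \<Rightarrow> nat) set"
  assumes k_le: "k \<le> n"
    and L_sub: "L \<subseteq> Fvec d (2*n)"
    and gh_vec: "\<forall>i<n. g i \<in> Fvec d (2*n) \<and> h i \<in> Fvec d (2*n)"
    and hyp_gh: "\<forall>i<n. \<forall>j<n. sympl d n (g i) (h j) = (if i = j then 1 else 0)"
    and L_span: "L = {lincomb d (n - k) c g | c. c \<in> Fvec d (n - k)}"
    and L_indep: "\<forall>c\<in>Fvec d (n - k). lincomb d (n - k) c g = (\<lambda>_. 0) \<longrightarrow> c = (\<lambda>_. 0)"
    and psi0_unit: "vinner (Fvec d n) \<psi>0 \<psi>0 = 1"
    and psi0_stab: "\<forall>i<n. \<forall>r\<in>Fvec d n. opapp (Fvec d n) (Pauli d \<omega> n (g i)) \<psi>0 r = \<psi>0 r"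
    and xhat_coset: "\<forall>t'\<in>Fvec d (n - k). xhat t' \<in> Fvec d (2*n) \<and>
                        (\<forall>i<n - k. sympl d n (g i) (xhat t') = t' i)"
    and s_vec: "s \<in> Fvec d (n - k)"
    and t_vec: "t \<in> Fvec d (n - k)"
begin

lemma g_in: "i < n \<Longrightarrow> g i \<in> Fvec d (2*n)" using gh_vec by blast
lemma h_in: "i < n \<Longrightarrow> h i \<in> Fvec d (2*n)" using gh_vec by blast

definition kt :: "(nat \<Rightarrow> nat) \<Rightarrow> ((nat \<Rightarrow> nat) \<Rightarrow> complex)" where
  "kt l = ket d \<omega> n h \<psi>0 l"

definition V :: "(nat \<Rightarrow> nat) \<Rightarrow> nat list \<Rightarrow> ((nat \<Rightarrow> nat) \<Rightarrow> complex)" where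
  "V l js = opapp I (opprod I (map (\<lambda>i. oppow I (Pauli d \<omega> n (h i)) (l i)) js)) \<psi>0"

lemma V_Nil: "r \<in> I \<Longrightarrow> V l [] r = \<psi>0 r"
  unfolding V_def opprod_def by (simp add: opapp_opid)

lemma V_Cons: "V l (j # js) = Pw (h j) (l j) (V l js)"
  unfolding V_def Pw_def opprod_def by (rule ext) (simp only: list.map foldr_Cons o_apply opapp_opmul)

lemma kt_V: "kt l = V l [0..<n]" unfolding kt_def ket_def V_def by simp

lemma V_eigen:
  assumes "distinct js" "set js \<subseteq> {..<n}" "i < n"
  shows "r \<in> I \<Longrightarrow> Nv (g i) (V l js) r = \<omega> ^ (if i \<in> set js then l i else 0) * V l js r"
  using assms(1,2)
proof (induction js arbitrary: r)
  case Nil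
  have "Nv (g i) (V l []) r = Nv (g i) \<psi>0 r" by (rule Nv_cong) (simp add: V_Nil)
  also have "\<dots> = \<psi>0 r" using psi0_stab assms(3) Nil.prems(1) by (simp add: Nv_def)
  finally show ?case using Nil.prems(1) by (simp add: V_Nil)
next
  case (Cons j js)
  have j: "j < n" using Cons.prems by simp
  have IH: "\<And>r. r \<in> I \<Longrightarrow> Nv (g i) (V l js) r = \<omega> ^ (if i \<in> set js then l i else 0) * V l js r"
    using Cons.IH Cons.prems by simp
  have "Nv (g i) (V l (j # js)) r = Nv (g i) (Pw (h j) (l j) (V l js)) r" by (simp only: V_Cons)
  also have "\<dots> = \<omega> ^ (l j * sympl d n (g i) (h j)) * Pw (h j) (l j) (Nv (g i) (V l js)) r"
    by (rule Nv_Pw_comm[OF g_in[OF assms(3)] h_in[OF j] Cons.prems(1)])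
  also have "Pw (h j) (l j) (Nv (g i) (V l js)) r
      = Pw (h j) (l j) (\<lambda>x. \<omega> ^ (if i \<in> set js then l i else 0) * V l js x) r"
    by (rule Pw_cong) (rule IH)
  also have "\<dots> = \<omega> ^ (if i \<in> set js then l i else 0) * V l (j # js) r"
    by (simp only: Pw_scale V_Cons)
  also have "sympl d n (g i) (h j) = (if i = j then 1 else 0)" using hyp_gh assms(3) j by blast
  finally show ?case using Cons.prems(2) by (auto simp: power_add)
qed

lemma kt_eigen: "i < n \<Longrightarrow> r \<in> I \<Longrightarrow> Nv (g i) (kt l) r = \<omega> ^ (l i) * kt l r"
  unfolding kt_V using V_eigen[of "[0..<n]" i r l] by (simp add: atLeast0LessThan)

lemma V_norm: "set js \<subseteq> {..<n} \<Longrightarrow> vinner I (V l js) (V l js) = 1"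
proof (induction js)
  case Nil
  have "vinner I (V l []) (V l []) = vinner I \<psi>0 \<psi>0" by (rule vinner_cong) (simp_all add: V_Nil)
  then show ?case using psi0_unit by simp
next
  case (Cons j js)
  then have j: "j < n" by simp
  show ?case using Cons by (simp only: V_Cons Pw_unitary[OF h_in[OF j]]) simp
qed

lemma kt_norm: "vinner I (kt l) (kt l) = 1"
  unfolding kt_V by (rule V_norm) auto

lemma kt_on: assumes l: "l \<in> I" and l': "l' \<in> I"
  shows "vinner I (kt l) (kt l') = (if l = l' then 1 else 0)"
proof (cases "l = l'")
  case True then show ?thesis by (simp add: kt_norm)
next
  case False
  then obtain i where i: "i < n" "l i \<noteq> l' i" using Fvec_eqI[OF l l'] by blast
  have "l i < d" "l' i < d" using l l' i unfolding Fvec_def by auto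
  then have ne: "l i mod d \<noteq> l' i mod d" using i by simp
  have "vinner I (kt l) (kt l') = 0"
    by (rule orth[OF g_in[OF i(1)] _ _ ne]) (simp_all add: kt_eigen[OF i(1)])
  then show ?thesis using False by simp
qed

lemma kt_complete: assumes r: "r \<in> I" and c: "c \<in> I"
  shows "(\<Sum>l\<in>I. kt l r * cnj (kt l c)) = (if r = c then 1 else 0)"
  by (rule onb_complete[OF finite_Fvec _ r c]) (simp add: kt_on[unfolded vinner_def])

lemma parseval: "(\<Sum>l\<in>I. vinner I (kt l) w * cnj (vinner I (kt l) w)) = vinner I w w"
proof -
  have "(\<Sum>l\<in>I. vinner I (kt l) w * cnj (vinner I (kt l) w))
      = (\<Sum>l\<in>I. \<Sum>r\<in>I. \<Sum>c\<in>I. (cnj (kt l r) * w r) * (kt l c * cnj (w c)))"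
    by (simp only: vinner_def cnj_sum complex_cnj_mult complex_cnj_cnj sum_product)
  also have "\<dots> = (\<Sum>r\<in>I. \<Sum>c\<in>I. \<Sum>l\<in>I. (cnj (kt l r) * w r) * (kt l c * cnj (w c)))"
    by (subst sum.swap) (rule sum.cong[OF refl], rule sum.swap)
  also have "\<dots> = (\<Sum>r\<in>I. \<Sum>c\<in>I. (w r * cnj (w c)) * (\<Sum>l\<in>I. kt l c * cnj (kt l r)))"
    by (simp only: sum_distrib_left mult_ac)
  also have "\<dots> = (\<Sum>r\<in>I. \<Sum>c\<in>I. (w r * cnj (w c)) * (if c = r then 1 else 0))"
    by (intro sum.cong refl) (simp only: kt_complete)
  also have "\<dots> = (\<Sum>r\<in>I. w r * cnj (w r))"
    by (intro sum.cong refl) (simp add: sum_delta_mult2)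
  finally show ?thesis unfolding vinner_def by (simp only: mult_ac)
qed

lemma syndrome:
  assumes x: "x \<in> Fvec d (2*n)" and l: "l \<in> I" and l': "l' \<in> I"
    and nz: "vinner I (kt l') (Nv x (kt l)) \<noteq> 0" and i: "i < n"
  shows "l' i = (l i + sympl d n (g i) x) mod d"
proof -
  have ev: "Nv (g i) (Nv x (kt l)) r = \<omega> ^ (l i + sympl d n (g i) x) * Nv x (kt l) r" if r: "r \<in> I" for r
  proof -
    have "Nv (g i) (Nv x (kt l)) r = \<omega> ^ sympl d n (g i) x * Nv x (Nv (g i) (kt l)) r"
      by (rule Nv_comm[OF g_in[OF i] x r])
    also have "Nv x (Nv (g i) (kt l)) r = Nv x (\<lambda>j. \<omega> ^ (l i) * kt l j) r"
      by (rule Nv_cong) (rule kt_eigen[OF i])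
    also have "\<dots> = \<omega> ^ (l i) * Nv x (kt l) r" by (rule Nv_scale)
    finally show ?thesis by (simp add: power_add mult_ac)
  qed
  have "l' i mod d = (l i + sympl d n (g i) x) mod d"
  proof (rule ccontr)
    assume ne: "l' i mod d \<noteq> (l i + sympl d n (g i) x) mod d"
    have "vinner I (kt l') (Nv x (kt l)) = 0"
      by (rule orth[OF g_in[OF i] _ _ ne]) (simp_all add: kt_eigen[OF i] ev)
    then show False using nz by simp
  qed
  moreover have "l' i < d" using l' i unfolding Fvec_def by simp
  ultimately show ?thesis by simp
qed

end

lemma vinner_lin:
  "vinner A z (\<lambda>r. \<Sum>u\<in>U. V u r * c u) = (\<Sum>u\<in>U. c u * vinner A z (V u))"
proof -
  have "vinner A z (\<lambda>r. \<Sum>u\<in>U. V u r * c u) = (\<Sum>r\<in>A. \<Sum>u\<in>U. cnj (z r) * (V u r * c u))"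
    by (simp only: vinner_def sum_distrib_left)
  also have "\<dots> = (\<Sum>u\<in>U. \<Sum>r\<in>A. cnj (z r) * (V u r * c u))" by (rule sum.swap)
  also have "\<dots> = (\<Sum>u\<in>U. c u * vinner A z (V u))" by (simp only: vinner_def sum_distrib_left mult_ac)
  finally show ?thesis .
qed

lemma vinner_cnj: "vinner A v w = cnj (vinner A w v)"
  unfolding vinner_def by (simp add: mult.commute)

lemma twofold:
  fixes \<beta> :: "'x \<Rightarrow> 'j \<Rightarrow> complex"
  assumes X: "finite X" and J: "finite J"
    and h: "\<And>j j'. j \<in> J \<Longrightarrow> j' \<in> J \<Longrightarrow> (\<Sum>x\<in>X. \<beta> x j * cnj (\<beta> x j')) = (if j = j' then D else 0)"
  shows "(\<Sum>x\<in>X. (\<Sum>j\<in>J. \<alpha> j * \<beta> x j) * cnj (\<Sum>j\<in>J. \<alpha> j * \<beta> x j)) = D * (\<Sum>j\<in>J. \<alpha> j * cnj (\<alpha> j))"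
proof -
  have "(\<Sum>x\<in>X. (\<Sum>j\<in>J. \<alpha> j * \<beta> x j) * cnj (\<Sum>j\<in>J. \<alpha> j * \<beta> x j))
      = (\<Sum>x\<in>X. \<Sum>j\<in>J. \<Sum>j'\<in>J. (\<alpha> j * cnj (\<alpha> j')) * (\<beta> x j * cnj (\<beta> x j')))"
    by (simp only: cnj_sum complex_cnj_mult sum_product mult_ac)
  also have "\<dots> = (\<Sum>j\<in>J. \<Sum>j'\<in>J. \<Sum>x\<in>X. (\<alpha> j * cnj (\<alpha> j')) * (\<beta> x j * cnj (\<beta> x j')))"
    by (subst sum.swap) (rule sum.cong[OF refl], rule sum.swap)
  also have "\<dots> = (\<Sum>j\<in>J. \<Sum>j'\<in>J. (\<alpha> j * cnj (\<alpha> j')) * (if j = j' then D else 0))"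
    by (intro sum.cong refl) (simp only: sum_distrib_left[symmetric] h)
  also have "\<dots> = (\<Sum>j\<in>J. (\<alpha> j * cnj (\<alpha> j)) * D)"
  proof (rule sum.cong[OF refl])
    fix j assume j: "j \<in> J"
    have "(\<Sum>j'\<in>J. (\<alpha> j * cnj (\<alpha> j')) * (if j = j' then D else 0)) = (\<Sum>j'\<in>J. if j = j' then (\<alpha> j * cnj (\<alpha> j')) * D else 0)"
      by (rule sum.cong) simp_all
    also have "\<dots> = (\<alpha> j * cnj (\<alpha> j)) * D" using J j by simp
    finally show "(\<Sum>j'\<in>J. (\<alpha> j * cnj (\<alpha> j')) * (if j = j' then D else 0)) = (\<alpha> j * cnj (\<alpha> j)) * D" .
  qed
  also have "\<dots> = D * (\<Sum>j\<in>J. \<alpha> j * cnj (\<alpha> j))" by (simp only: sum_distrib_left mult_ac)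
  finally show ?thesis .
qed

lemma fourfold:
  fixes P :: "'x \<Rightarrow> 'i \<Rightarrow> 'i \<Rightarrow> complex"
  assumes X: "finite X" and I: "finite I"
    and h: "\<And>r c r2 c2. r \<in> I \<Longrightarrow> c \<in> I \<Longrightarrow> r2 \<in> I \<Longrightarrow> c2 \<in> I \<Longrightarrow>
              (\<Sum>x\<in>X. P x r c * cnj (P x r2 c2)) = (if r = r2 \<and> c = c2 then D else 0)"
  shows "(\<Sum>x\<in>X. (\<Sum>r\<in>I. \<Sum>c\<in>I. A r c * P x r c) * cnj (\<Sum>r\<in>I. \<Sum>c\<in>I. B r c * P x r c))
       = D * (\<Sum>r\<in>I. \<Sum>c\<in>I. A r c * cnj (B r c))"
proof -
  have e: "(\<Sum>r\<in>I. \<Sum>c\<in>I. A r c * P x r c) = (\<Sum>rc\<in>I \<times> I. A (fst rc) (snd rc) * P x (fst rc) (snd rc))"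
    and e2: "(\<Sum>r\<in>I. \<Sum>c\<in>I. B r c * P x r c) = (\<Sum>rc\<in>I \<times> I. B (fst rc) (snd rc) * P x (fst rc) (snd rc))" for x
    by (simp_all add: sum.cartesian_product split_def)
  have "(\<Sum>x\<in>X. (\<Sum>r\<in>I. \<Sum>c\<in>I. A r c * P x r c) * cnj (\<Sum>r\<in>I. \<Sum>c\<in>I. B r c * P x r c))
      = (\<Sum>x\<in>X. \<Sum>rc\<in>I \<times> I. \<Sum>rc'\<in>I \<times> I. (A (fst rc) (snd rc) * cnj (B (fst rc') (snd rc'))) *
            (P x (fst rc) (snd rc) * cnj (P x (fst rc') (snd rc'))))"
    unfolding e e2 by (simp only: cnj_sum complex_cnj_mult sum_product mult_ac)
  also have "\<dots> = (\<Sum>rc\<in>I \<times> I. \<Sum>rc'\<in>I \<times> I. \<Sum>x\<in>X. (A (fst rc) (snd rc) * cnj (B (fst rc') (snd rc'))) *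
            (P x (fst rc) (snd rc) * cnj (P x (fst rc') (snd rc'))))"
    by (subst sum.swap) (rule sum.cong[OF refl], rule sum.swap)
  also have "\<dots> = (\<Sum>rc\<in>I \<times> I. \<Sum>rc'\<in>I \<times> I. (A (fst rc) (snd rc) * cnj (B (fst rc') (snd rc'))) *
            (if rc = rc' then D else 0))"
  proof (intro sum.cong refl)
    fix rc rc' assume rc: "rc \<in> I \<times> I" and rc': "rc' \<in> I \<times> I"
    have "(\<Sum>x\<in>X. P x (fst rc) (snd rc) * cnj (P x (fst rc') (snd rc'))) = (if rc = rc' then D else 0)"
      using h[of "fst rc" "snd rc" "fst rc'" "snd rc'"] rc rc' by (auto simp: prod_eq_iff)
    then show "(\<Sum>x\<in>X. (A (fst rc) (snd rc) * cnj (B (fst rc') (snd rc'))) *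
            (P x (fst rc) (snd rc) * cnj (P x (fst rc') (snd rc'))))
        = (A (fst rc) (snd rc) * cnj (B (fst rc') (snd rc'))) * (if rc = rc' then D else 0)"
      by (simp only: sum_distrib_left[symmetric])
  qed
  also have "\<dots> = (\<Sum>rc\<in>I \<times> I. A (fst rc) (snd rc) * cnj (B (fst rc) (snd rc)) * D)"
  proof (rule sum.cong[OF refl])
    fix rc assume rc: "rc \<in> I \<times> I"
    have "(\<Sum>rc'\<in>I \<times> I. (A (fst rc) (snd rc) * cnj (B (fst rc') (snd rc'))) * (if rc = rc' then D else 0))
        = (\<Sum>rc'\<in>I \<times> I. if rc = rc' then (A (fst rc) (snd rc) * cnj (B (fst rc') (snd rc'))) * D else 0)"
      by (rule sum.cong) simp_all
    also have "\<dots> = A (fst rc) (snd rc) * cnj (B (fst rc) (snd rc)) * D" using rc I by simp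
    finally show "(\<Sum>rc'\<in>I \<times> I. (A (fst rc) (snd rc) * cnj (B (fst rc') (snd rc'))) * (if rc = rc' then D else 0))
        = A (fst rc) (snd rc) * cnj (B (fst rc) (snd rc)) * D" .
  qed
  also have "\<dots> = D * (\<Sum>r\<in>I. \<Sum>c\<in>I. A r c * cnj (B r c))"
    by (simp add: sum.cartesian_product split_def sum_distrib_left mult_ac)
  finally show ?thesis .
qed

context qcode begin

abbreviation Fk where "Fk \<equiv> Fvec d k"
definition cs where "cs u = catv (n - k) s u"
definition ct where "ct u = catv (n - k) (vadd d t s) u"
abbreviation xh where "xh \<equiv> xhat t"
definition aa where "aa u' u = vinner I (kt (ct u')) (Nv xh (kt (cs u)))"
definition bb where "bb x u' u = vinner I (kt (ct u')) (Nv x (kt (cs u)))"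

lemma catv_in:
  assumes s': "s' \<in> Fvec d (n - k)" and u: "u \<in> Fk"
  shows "catv (n - k) s' u \<in> I"
  unfolding Fvec_def mem_Collect_eq
proof (intro conjI allI impI)
  fix i assume i: "i < n"
  show "catv (n - k) s' u i < d"
  proof (cases "i < n - k")
    case True then show ?thesis using s' unfolding catv_def Fvec_def by simp
  next
    case False
    then have "i - (n - k) < k" using i k_le by simp
    then show ?thesis using u False unfolding catv_def Fvec_def by simp
  qed
next
  fix i assume i: "n \<le> i"
  then have "\<not> i < n - k" "k \<le> i - (n - k)" using k_le by simp_all
  then show "catv (n - k) s' u i = 0" using u unfolding catv_def Fvec_def by simp
qed

lemma catv_inj: "inj_on (catv (n - k) s') Fk"
proof (rule inj_onI)
  fix u v assume u: "u \<in> Fk" and v: "v \<in> Fk" and e: "catv (n - k) s' u = catv (n - k) s' v"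
  have "\<forall>j<k. u j = v j"
  proof (intro allI impI)
    fix j assume "j < k"
    have "catv (n - k) s' u (j + (n - k)) = catv (n - k) s' v (j + (n - k))" using e by simp
    then show "u j = v j" unfolding catv_def by simp
  qed
  then show "u = v" using Fvec_eqI[OF u v] by blast
qed

lemma ts_in: "vadd d t s \<in> Fvec d (n - k)" by (rule vadd_in[OF t_vec s_vec])
lemma cs_in: "u \<in> Fk \<Longrightarrow> cs u \<in> I" unfolding cs_def by (rule catv_in[OF s_vec])
lemma ct_in: "u \<in> Fk \<Longrightarrow> ct u \<in> I" unfolding ct_def by (rule catv_in[OF ts_in])
lemma cs_inj: "u \<in> Fk \<Longrightarrow> v \<in> Fk \<Longrightarrow> (cs u = cs v) = (u = v)"
  unfolding cs_def using catv_inj by (auto dest: inj_onD)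
lemma ct_inj: "u \<in> Fk \<Longrightarrow> v \<in> Fk \<Longrightarrow> (ct u = ct v) = (u = v)"
  unfolding ct_def using catv_inj by (auto dest: inj_onD)
lemma xh_in: "xh \<in> Fvec d (2*n)" using xhat_coset t_vec by blast
lemma xh_synd: "i < n - k \<Longrightarrow> sympl d n (g i) xh = t i" using xhat_coset t_vec by blast

lemma codeproj_eq: "codeproj d \<omega> n k h \<psi>0 s' = (\<lambda>r c. \<Sum>u\<in>Fk. ketbra (kt (catv (n - k) s' u)) (kt (catv (n - k) s' u)) r c)"
  unfolding codeproj_def kt_def by simp

lemma f_formula:
  "tr I (opmul I (opscale (1 / of_nat (d ^ k)) (codeproj d \<omega> n k h \<psi>0 s))
           (opmul I (Rop d \<omega> n k h \<psi>0 xhat s t) (Pauli d \<omega> n x)))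
   = (1 / of_nat (d ^ k)) * (\<Sum>u\<in>Fk. \<Sum>u'\<in>Fk. cnj (aa u' u) * bb x u' u)"
proof -
  let ?R = "Rop d \<omega> n k h \<psi>0 xhat s t"
  have M: "opapp I (opmul I ?R (Pauli d \<omega> n x)) v
      = opapp I (adj (Pauli d \<omega> n xh)) (opapp I (codeproj d \<omega> n k h \<psi>0 (vadd d t s)) (Nv x v))" for v
    by (rule ext) (simp only: opapp_opmul Rop_def Nv_def)
  have P: "opapp I (codeproj d \<omega> n k h \<psi>0 (vadd d t s)) w = (\<lambda>r. \<Sum>u'\<in>Fk. kt (ct u') r * vinner I (kt (ct u')) w)" for w
    by (rule ext) (simp only: codeproj_eq opapp_ketbra_sum ct_def)
  have "tr I (opmul I (opscale (1 / of_nat (d ^ k)) (codeproj d \<omega> n k h \<psi>0 s)) (opmul I ?R (Pauli d \<omega> n x)))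
      = (1 / of_nat (d ^ k)) * (\<Sum>u\<in>Fk. vinner I (kt (cs u)) (opapp I (opmul I ?R (Pauli d \<omega> n x)) (kt (cs u))))"
    by (simp only: tr_opscale1 codeproj_eq tr_ketbra_sum cs_def)
  also have "(\<Sum>u\<in>Fk. vinner I (kt (cs u)) (opapp I (opmul I ?R (Pauli d \<omega> n x)) (kt (cs u))))
      = (\<Sum>u\<in>Fk. \<Sum>u'\<in>Fk. cnj (aa u' u) * bb x u' u)"
  proof (rule sum.cong[OF refl])
    fix u
    have "vinner I (kt (cs u)) (opapp I (opmul I ?R (Pauli d \<omega> n x)) (kt (cs u)))
        = vinner I (Nv xh (kt (cs u))) (\<lambda>r. \<Sum>u'\<in>Fk. kt (ct u') r * vinner I (kt (ct u')) (Nv x (kt (cs u))))"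
      by (simp only: M vinner_adj P Nv_def[symmetric])
    also have "\<dots> = (\<Sum>u'\<in>Fk. vinner I (kt (ct u')) (Nv x (kt (cs u))) * vinner I (Nv xh (kt (cs u))) (kt (ct u')))"
      by (rule vinner_lin)
    also have "\<dots> = (\<Sum>u'\<in>Fk. cnj (aa u' u) * bb x u' u)"
      unfolding aa_def bb_def by (simp only: vinner_cnj[of I "Nv xh (kt (cs u))"] mult.commute)
    finally show "vinner I (kt (cs u)) (opapp I (opmul I ?R (Pauli d \<omega> n x)) (kt (cs u))) = (\<Sum>u'\<in>Fk. cnj (aa u' u) * bb x u' u)" .
  qed
  finally show ?thesis .
qed

lemma kpc:
  assumes p: "p \<in> I" and p': "p' \<in> I" and q: "q \<in> I" and q': "q' \<in> I"
  shows "(\<Sum>x\<in>Fvec d (2*n). vinner I (kt p') (Nv x (kt p)) * cnj (vinner I (kt q') (Nv x (kt q))))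
       = of_nat d ^ n * (if p = q \<and> p' = q' then 1 else 0)"
proof -
  have ex: "vinner I (kt a') (Nv x (kt a)) = (\<Sum>r\<in>I. \<Sum>c\<in>I. (cnj (kt a' r) * kt a c) * Pauli d \<omega> n x r c)" for a a' x
    by (simp only: vinner_def Nv_def opapp_def sum_distrib_left mult_ac)
  have "(\<Sum>x\<in>Fvec d (2*n). vinner I (kt p') (Nv x (kt p)) * cnj (vinner I (kt q') (Nv x (kt q))))
      = of_nat d ^ n * (\<Sum>r\<in>I. \<Sum>c\<in>I. (cnj (kt p' r) * kt p c) * cnj (cnj (kt q' r) * kt q c))"
    unfolding ex by (rule fourfold[OF finite_Fvec finite_Fvec Pauli_complete])
  also have "(\<Sum>r\<in>I. \<Sum>c\<in>I. (cnj (kt p' r) * kt p c) * cnj (cnj (kt q' r) * kt q c))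
      = vinner I (kt p') (kt q') * vinner I (kt q) (kt p)"
    by (simp only: vinner_def sum_product complex_cnj_mult complex_cnj_cnj mult_ac) (rule sum.swap)
  also have "\<dots> = (if p = q \<and> p' = q' then 1 else 0)" using kt_on p p' q q' by auto
  finally show ?thesis .
qed

end

lemma vinner_scale: "vinner A z (\<lambda>r. c * v r) = c * vinner A z v"
  unfolding vinner_def by (simp add: sum_distrib_left mult_ac)

context qcode begin

definition fx where
  "fx x = tr I (opmul I (opscale (1 / of_nat (d ^ k)) (codeproj d \<omega> n k h \<psi>0 s))
              (opmul I (Rop d \<omega> n k h \<psi>0 xhat s t) (Pauli d \<omega> n x)))"

lemma bb_orth:
  assumes u: "u \<in> Fk" and u': "u' \<in> Fk" and v: "v \<in> Fk" and v': "v' \<in> Fk"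
  shows "(\<Sum>x\<in>Fvec d (2*n). bb x u' u * cnj (bb x v' v)) = (if (u, u') = (v, v') then of_nat d ^ n else 0)"
  unfolding bb_def using kpc[OF cs_in[OF u] ct_in[OF u'] cs_in[OF v] ct_in[OF v']]
    cs_inj[OF u v] ct_inj[OF u' v'] by simp

lemma sum_rule:
  "(\<Sum>x\<in>Fvec d (2*n). fx x * cnj (fx x))
     = (1 / of_nat (d ^ k))^2 * of_nat d ^ n * (\<Sum>u\<in>Fk. \<Sum>u'\<in>Fk. aa u' u * cnj (aa u' u))"
proof -
  define c :: complex where "c = 1 / of_nat (d ^ k)"
  have cc: "cnj c = c" unfolding c_def by simp
  define S where "S x = (\<Sum>j\<in>Fk \<times> Fk. cnj (aa (snd j) (fst j)) * bb x (snd j) (fst j))" for x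
  have fxS: "fx x = c * S x" for x
    unfolding fx_def f_formula c_def S_def by (simp add: sum.cartesian_product split_def)
  have "(\<Sum>x\<in>Fvec d (2*n). fx x * cnj (fx x)) = c * c * (\<Sum>x\<in>Fvec d (2*n). S x * cnj (S x))"
    unfolding fxS by (simp add: cc sum_distrib_left mult_ac)
  also have "(\<Sum>x\<in>Fvec d (2*n). S x * cnj (S x))
      = of_nat d ^ n * (\<Sum>j\<in>Fk \<times> Fk. cnj (aa (snd j) (fst j)) * cnj (cnj (aa (snd j) (fst j))))"
    unfolding S_def
  proof (rule twofold[OF finite_Fvec finite_cartesian_product[OF finite_Fvec finite_Fvec]])
    fix j j' assume "j \<in> Fk \<times> Fk" "j' \<in> Fk \<times> Fk"
    then show "(\<Sum>x\<in>Fvec d (2*n). bb x (snd j) (fst j) * cnj (bb x (snd j') (fst j'))) = (if j = j' then of_nat d ^ n else 0)"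
      using bb_orth[of "fst j" "snd j" "fst j'" "snd j'"] by (auto simp: mem_Times_iff)
  qed
  also have "(\<Sum>j\<in>Fk \<times> Fk. cnj (aa (snd j) (fst j)) * cnj (cnj (aa (snd j) (fst j))))
      = (\<Sum>u\<in>Fk. \<Sum>u'\<in>Fk. aa u' u * cnj (aa u' u))"
    by (simp add: sum.cartesian_product split_def mult.commute)
  finally show ?thesis unfolding c_def by (simp add: power2_eq_square mult_ac)
qed

lemma ct_surj:
  assumes l: "l \<in> I" and e: "\<forall>i<n - k. l i = vadd d t s i"
  shows "l \<in> ct ` Fk"
proof -
  define u where "u j = l (j + (n - k))" for j
  have u: "u \<in> Fk" unfolding Fvec_def mem_Collect_eq
  proof (intro conjI allI impI)
    fix j assume "j < k" then have "j + (n - k) < n" using k_le by simp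
    then show "u j < d" using l unfolding u_def Fvec_def by simp
  next
    fix j assume "k \<le> j" then have "n \<le> j + (n - k)" using k_le by simp
    then show "u j = 0" using l unfolding u_def Fvec_def by simp
  qed
  have "ct u = l"
  proof (rule ext)
    fix i show "ct u i = l i"
    proof (cases "i < n - k")
      case True then show ?thesis using e unfolding ct_def catv_def by simp
    next
      case False then show ?thesis unfolding ct_def catv_def u_def by simp
    qed
  qed
  then show ?thesis using u by blast
qed

lemma T_row: assumes u: "u \<in> Fk" shows "(\<Sum>u'\<in>Fk. aa u' u * cnj (aa u' u)) = 1"
proof -
  define w where "w = Nv xh (kt (cs u))"
  have zero: "vinner I (kt l) w * cnj (vinner I (kt l) w) = 0" if l: "l \<in> I - ct ` Fk" for l
  proof (rule ccontr)
    assume "vinner I (kt l) w * cnj (vinner I (kt l) w) \<noteq> 0"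
    then have nz: "vinner I (kt l) (Nv xh (kt (cs u))) \<noteq> 0" unfolding w_def by auto
    have "\<forall>i<n - k. l i = vadd d t s i"
    proof (intro allI impI)
      fix i assume i: "i < n - k"
      then have i': "i < n" by simp
      have "l i = (cs u i + sympl d n (g i) xh) mod d"
        using syndrome[OF xh_in cs_in[OF u] _ nz i'] l by simp
      also have "\<dots> = vadd d t s i" using i xh_synd[OF i] unfolding cs_def catv_def vadd_def
        by (simp add: add.commute)
      finally show "l i = vadd d t s i" .
    qed
    moreover have lI: "l \<in> I" using l by simp
    ultimately have "l \<in> ct ` Fk" using ct_surj by blast
    then show False using l by simp
  qed
  have sub: "ct ` Fk \<subseteq> I" using ct_in by blast
  have "(1::complex) = vinner I w w" unfolding w_def by (simp add: Nv_unitary[OF xh_in] kt_norm)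
  also have "\<dots> = (\<Sum>l\<in>I. vinner I (kt l) w * cnj (vinner I (kt l) w))" by (rule parseval[symmetric])
  also have "\<dots> = (\<Sum>l\<in>ct ` Fk. vinner I (kt l) w * cnj (vinner I (kt l) w))"
    by (rule sum.mono_neutral_right[OF finite_Fvec sub]) (use zero in blast)
  also have "\<dots> = (\<Sum>u'\<in>Fk. vinner I (kt (ct u')) w * cnj (vinner I (kt (ct u')) w))"
    by (rule sum.reindex_cong[of ct]) (auto simp: inj_on_def ct_inj)
  also have "\<dots> = (\<Sum>u'\<in>Fk. aa u' u * cnj (aa u' u))" unfolding aa_def w_def by simp
  finally show ?thesis by simp
qed

lemma T_val: "(\<Sum>u\<in>Fk. \<Sum>u'\<in>Fk. aa u' u * cnj (aa u' u)) = of_nat (d ^ k)"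
proof -
  have "(\<Sum>u\<in>Fk. \<Sum>u'\<in>Fk. aa u' u * cnj (aa u' u)) = (\<Sum>u\<in>Fk. 1)"
    by (rule sum.cong[OF refl]) (rule T_row)
  also have "\<dots> = of_nat (d ^ k)" by (simp add: card_Fvec)
  finally show ?thesis .
qed

lemma sum_all: "(\<Sum>x\<in>Fvec d (2*n). fx x * cnj (fx x)) = of_nat (d ^ (n - k))"
proof -
  have dz: "(of_nat d :: complex) \<noteq> 0" using d_pos by simp
  have "(\<Sum>x\<in>Fvec d (2*n). fx x * cnj (fx x)) = (1 / of_nat d ^ k)^2 * of_nat d ^ n * of_nat d ^ k"
    by (simp only: sum_rule T_val of_nat_power)
  also have "\<dots> = of_nat d ^ n / of_nat d ^ k"
    using dz by (simp add: power2_eq_square field_simps)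
  also have "\<dots> = of_nat d ^ (n - k)" using dz k_le by (simp add: power_diff)
  finally show ?thesis by simp
qed

end

context qcode begin

lemma smul_in: assumes j: "j < n" shows "(\<lambda>i. (e * g j i) mod d) \<in> Fvec d (2*n)"
  unfolding Fvec_def mem_Collect_eq
proof (intro conjI allI impI)
  fix i show "(e * g j i) mod d < d" using d_pos by simp
next
  fix i assume "2*n \<le> i"
  then have "g j i = 0" using g_in[OF j] unfolding Fvec_def by simp
  then show "(e * g j i) mod d = 0" by simp
qed

lemma lincomb_in: assumes m: "m \<le> n" shows "lincomb d m cc g \<in> Fvec d (2*n)"
  unfolding Fvec_def mem_Collect_eq
proof (intro conjI allI impI)
  fix i show "lincomb d m cc g i < d" unfolding lincomb_def using d_pos by simp
next
  fix i assume i: "2*n \<le> i"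
  have "g j i = 0" if "j < m" for j using g_in[of j] that m i unfolding Fvec_def by simp
  then show "lincomb d m cc g i = 0" unfolding lincomb_def by simp
qed

lemma lincomb_0: "lincomb d 0 cc g = (\<lambda>_. 0)" unfolding lincomb_def by simp

lemma lincomb_Suc: "lincomb d (Suc m) cc g = vadd d (lincomb d m cc g) (\<lambda>i. (cc m * g m i) mod d)"
  unfolding lincomb_def vadd_def by (rule ext) (simp add: mod_add_eq)

lemma smul_0: "(\<lambda>i. (0 * g j i) mod d) = (\<lambda>_. 0)" by simp

lemma smul_Suc: "(\<lambda>i. (Suc e * g j i) mod d) = vadd d (\<lambda>i. (e * g j i) mod d) (g j)"
proof (rule ext)
  fix i
  have "(e * g j i mod d + g j i) mod d = (e * g j i + g j i) mod d" by (rule mod_add_left_eq)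
  also have "e * g j i + g j i = Suc e * g j i" by simp
  finally show "(Suc e * g j i) mod d = vadd d (\<lambda>i. (e * g j i) mod d) (g j) i"
    unfolding vadd_def by (rule sym)
qed

lemma Nv_vadd:
  assumes a: "a \<in> Fvec d (2*n)" and b: "b \<in> Fvec d (2*n)" and r: "r \<in> I"
  shows "Nv (vadd d a b) v r = cnj (cPr a b) * Nv a (Nv b v) r"
proof -
  have "cnj (cPr a b) * cPr a b = 1"
    using complex_norm_square[of "cPr a b"] norm_cPr by (simp add: mult.commute)
  then show ?thesis unfolding Nv_prod[OF a b r] by (simp add: mult.assoc[symmetric])
qed

lemma MG:
  assumes j: "j < n"
  shows "\<exists>q. cmod q = 1 \<and> (\<forall>l. \<forall>r\<in>I. Nv (\<lambda>i. (e * g j i) mod d) (kt l) r = q * \<omega> ^ (e * l j) * kt l r)"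
proof (induction e)
  case 0
  show ?case by (rule exI[of _ 1]) (simp add: Nv_zero)
next
  case (Suc e)
  then obtain q where q: "cmod q = 1"
    and qe: "\<And>l r. r \<in> I \<Longrightarrow> Nv (\<lambda>i. (e * g j i) mod d) (kt l) r = q * \<omega> ^ (e * l j) * kt l r" by blast
  define A where "A = (\<lambda>i. (e * g j i) mod d)"
  have A: "A \<in> Fvec d (2*n)" unfolding A_def by (rule smul_in[OF j])
  define q' where "q' = cnj (cPr A (g j)) * q"
  have "Nv (\<lambda>i. (Suc e * g j i) mod d) (kt l) r = q' * \<omega> ^ (Suc e * l j) * kt l r" if r: "r \<in> I" for l r
  proof -
    have "Nv (\<lambda>i. (Suc e * g j i) mod d) (kt l) r = cnj (cPr A (g j)) * Nv A (Nv (g j) (kt l)) r"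
      unfolding smul_Suc A_def[symmetric] by (rule Nv_vadd[OF A g_in[OF j] r])
    also have "Nv A (Nv (g j) (kt l)) r = Nv A (\<lambda>x. \<omega> ^ (l j) * kt l x) r"
      by (rule Nv_cong) (rule kt_eigen[OF j])
    also have "\<dots> = \<omega> ^ (l j) * Nv A (kt l) r" by (rule Nv_scale)
    also have "Nv A (kt l) r = q * \<omega> ^ (e * l j) * kt l r" unfolding A_def by (rule qe[OF r])
    finally show ?thesis unfolding q'_def by (simp add: power_add mult_ac)
  qed
  moreover have "cmod q' = 1" unfolding q'_def by (simp add: norm_mult q norm_cPr)
  ultimately show ?case by blast
qed

lemma LC:
  "m \<le> n \<Longrightarrow> \<exists>p. cmod p = 1 \<and> (\<forall>l. \<forall>r\<in>I. Nv (lincomb d m cc g) (kt l) r = p * \<omega> ^ (\<Sum>j<m. cc j * l j) * kt l r)"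
proof (induction m)
  case 0
  show ?case by (rule exI[of _ 1]) (simp add: lincomb_0 Nv_zero)
next
  case (Suc m)
  then have m: "m < n" by simp
  have mle: "m \<le> n" using m by simp
  obtain p where p: "cmod p = 1"
    and pe: "\<And>l r. r \<in> I \<Longrightarrow> Nv (lincomb d m cc g) (kt l) r = p * \<omega> ^ (\<Sum>j<m. cc j * l j) * kt l r"
    using Suc.IH[OF mle] by blast
  obtain q where q: "cmod q = 1"
    and qe: "\<And>l r. r \<in> I \<Longrightarrow> Nv (\<lambda>i. (cc m * g m i) mod d) (kt l) r = q * \<omega> ^ (cc m * l m) * kt l r"
    using MG[OF m, of "cc m"] by blast
  define B where "B = lincomb d m cc g"
  define C where "C = (\<lambda>i. (cc m * g m i) mod d)"
  have B: "B \<in> Fvec d (2*n)" unfolding B_def using m by (intro lincomb_in) simp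
  have C: "C \<in> Fvec d (2*n)" unfolding C_def by (rule smul_in[OF m])
  define p' where "p' = cnj (cPr B C) * q * p"
  have "Nv (lincomb d (Suc m) cc g) (kt l) r = p' * \<omega> ^ (\<Sum>j<Suc m. cc j * l j) * kt l r" if r: "r \<in> I" for l r
  proof -
    have "Nv (lincomb d (Suc m) cc g) (kt l) r = cnj (cPr B C) * Nv B (Nv C (kt l)) r"
      unfolding lincomb_Suc B_def[symmetric] C_def[symmetric] by (rule Nv_vadd[OF B C r])
    also have "Nv B (Nv C (kt l)) r = Nv B (\<lambda>x. q * \<omega> ^ (cc m * l m) * kt l x) r"
      by (rule Nv_cong) (unfold C_def, rule qe)
    also have "\<dots> = q * \<omega> ^ (cc m * l m) * Nv B (kt l) r" by (rule Nv_scale)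
    also have "Nv B (kt l) r = p * \<omega> ^ (\<Sum>j<m. cc j * l j) * kt l r" unfolding B_def by (rule pe[OF r])
    finally show ?thesis unfolding p'_def by (simp add: power_add mult_ac)
  qed
  moreover have "cmod p' = 1" unfolding p'_def by (simp add: norm_mult p q norm_cPr)
  ultimately show ?case by blast
qed

lemma EL:
  assumes y: "y \<in> L"
  shows "\<exists>lam. cmod lam = 1 \<and> (\<forall>u\<in>Fk. \<forall>r\<in>I. Nv y (kt (cs u)) r = lam * kt (cs u) r)"
proof -
  obtain cc where y': "y = lincomb d (n - k) cc g" using y L_span by blast
  obtain p where p: "cmod p = 1"
    and pe: "\<And>l r. r \<in> I \<Longrightarrow> Nv (lincomb d (n - k) cc g) (kt l) r = p * \<omega> ^ (\<Sum>j<n - k. cc j * l j) * kt l r"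
    using LC[of "n - k" cc] by auto
  define lam where "lam = p * \<omega> ^ (\<Sum>j<n - k. cc j * s j)"
  have "Nv y (kt (cs u)) r = lam * kt (cs u) r" if "r \<in> I" for u r
  proof -
    have "(\<Sum>j<n - k. cc j * cs u j) = (\<Sum>j<n - k. cc j * s j)"
      by (rule sum.cong) (simp_all add: cs_def catv_def)
    then show ?thesis unfolding y' lam_def using pe[OF that, of "cs u"] by simp
  qed
  moreover have "cmod lam = 1" unfolding lam_def by (simp add: norm_mult p norm_power norm_omega)
  ultimately show ?thesis by blast
qed

lemma coset_val:
  assumes y: "y \<in> L"
  shows "fx (vadd d xh y) * cnj (fx (vadd d xh y)) = 1"
proof -
  have yF: "y \<in> Fvec d (2*n)" using y L_sub by blast
  obtain lam where lam: "cmod lam = 1"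
    and le: "\<And>u r. u \<in> Fk \<Longrightarrow> r \<in> I \<Longrightarrow> Nv y (kt (cs u)) r = lam * kt (cs u) r"
    using EL[OF y] by blast
  define mu where "mu = cnj (cPr xh y) * lam"
  have mu: "cmod mu = 1" unfolding mu_def by (simp add: norm_mult lam norm_cPr)
  have bb_eq: "bb (vadd d xh y) u' u = mu * aa u' u" if u: "u \<in> Fk" for u u'
  proof -
    have "Nv (vadd d xh y) (kt (cs u)) r = mu * Nv xh (kt (cs u)) r" if r: "r \<in> I" for r
    proof -
      have "Nv (vadd d xh y) (kt (cs u)) r = cnj (cPr xh y) * Nv xh (Nv y (kt (cs u))) r"
        by (rule Nv_vadd[OF xh_in yF r])
      also have "Nv xh (Nv y (kt (cs u))) r = Nv xh (\<lambda>x. lam * kt (cs u) x) r"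
        by (rule Nv_cong) (rule le[OF u])
      also have "\<dots> = lam * Nv xh (kt (cs u)) r" by (rule Nv_scale)
      finally show ?thesis unfolding mu_def by (simp add: mult_ac)
    qed
    then have "bb (vadd d xh y) u' u = vinner I (kt (ct u')) (\<lambda>r. mu * Nv xh (kt (cs u)) r)"
      unfolding bb_def by (intro vinner_cong) simp_all
    then show ?thesis unfolding aa_def by (simp add: vinner_scale)
  qed
  have "fx (vadd d xh y) = (1 / of_nat (d ^ k)) * (\<Sum>u\<in>Fk. \<Sum>u'\<in>Fk. cnj (aa u' u) * (mu * aa u' u))"
    unfolding fx_def f_formula by (intro arg_cong[where f="\<lambda>z. _ * z"] sum.cong refl) (simp add: bb_eq)
  also have "(\<Sum>u\<in>Fk. \<Sum>u'\<in>Fk. cnj (aa u' u) * (mu * aa u' u)) = mu * (\<Sum>u\<in>Fk. \<Sum>u'\<in>Fk. aa u' u * cnj (aa u' u))"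
    by (simp add: sum_distrib_left mult_ac)
  also have "\<dots> = mu * of_nat (d ^ k)" by (simp only: T_val)
  finally have "fx (vadd d xh y) = mu" using d_pos by simp
  then show ?thesis using complex_norm_square[of mu] mu by simp
qed

lemma lincomb_inj:
  assumes c: "c \<in> Fvec d (n - k)" and c': "c' \<in> Fvec d (n - k)"
    and e: "lincomb d (n - k) c g = lincomb d (n - k) c' g"
  shows "c = c'"
proof -
  define m where "m = n - k"
  define e0 where "e0 j = (c j + (d - c' j)) mod d" for j
  have cl: "c j < d" "c' j < d" if "j < m" for j using c c' that unfolding m_def Fvec_def by auto
  have e0: "e0 \<in> Fvec d m" unfolding Fvec_def mem_Collect_eq
  proof (intro conjI allI impI)
    fix j show "e0 j < d" unfolding e0_def using d_pos by simp
  next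
    fix j assume "m \<le> j"
    then have "c j = 0" "c' j = 0" using c c' unfolding m_def Fvec_def by auto
    then show "e0 j = 0" unfolding e0_def by simp
  qed
  have "lincomb d m e0 g = (\<lambda>_. 0)"
  proof (rule ext)
    fix i
    have ce: "[int (e0 j) = int (c j) - int (c' j)] (mod int d)" if "j < m" for j
    proof -
      have h1: "[int (e0 j) = int (c j + (d - c' j))] (mod int d)" unfolding e0_def by (rule modc)
      have h2: "int (c j + (d - c' j)) = int (c j) - int (c' j) + int d" using cl[OF that] by simp
      have h3: "[int (c j) - int (c' j) + int d = int (c j) - int (c' j)] (mod int d)"
        by (simp add: cong_def)
      show ?thesis using cong_trans[OF h1[unfolded h2] h3] .
    qed
    have A: "[int (\<Sum>j<m. e0 j * g j i) = (\<Sum>j<m. (int (c j) - int (c' j)) * int (g j i))] (mod int d)"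
      unfolding of_nat_sum of_nat_mult by (rule cong_sum) (simp add: ce cong_mult)
    have B: "(\<Sum>j<m. (int (c j) - int (c' j)) * int (g j i)) = int (\<Sum>j<m. c j * g j i) - int (\<Sum>j<m. c' j * g j i)"
      by (simp add: sum_subtractf left_diff_distrib)
    have C: "[int (\<Sum>j<m. c j * g j i) = int (\<Sum>j<m. c' j * g j i)] (mod int d)"
      unfolding cong_int_iff unfolding cong_def using fun_cong[OF e, of i] unfolding lincomb_def m_def .
    have D: "[int (\<Sum>j<m. c j * g j i) - int (\<Sum>j<m. c' j * g j i) = int (\<Sum>j<m. c' j * g j i) - int (\<Sum>j<m. c' j * g j i)] (mod int d)"
      by (rule cong_diff[OF C cong_refl])
    have E: "[int (\<Sum>j<m. e0 j * g j i) = 0] (mod int d)"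
      using cong_trans[OF A[unfolded B] D] by simp
    have "int ((\<Sum>j<m. e0 j * g j i) mod d) = 0"
      using E unfolding cong_def by (simp only: zmod_int) simp
    then have "(\<Sum>j<m. e0 j * g j i) mod d = 0" by simp
    then show "lincomb d m e0 g i = 0" unfolding lincomb_def by simp
  qed
  then have ez: "e0 = (\<lambda>_. 0)" using L_indep e0 unfolding m_def by blast
  have "\<forall>j<m. c j = c' j"
  proof (intro allI impI)
    fix j assume j: "j < m"
    have z: "(c j + (d - c' j)) mod d = 0" using fun_cong[OF ez, of j] unfolding e0_def by simp
    show "c j = c' j"
    proof (cases "c' j \<le> c j")
      case True
      have "c j + (d - c' j) = (c j - c' j) + d" using True cl[OF j] by simp
      then have "(c j - c' j) mod d = 0" using z by simp
      then have "c j - c' j = 0" using cl[OF j] by simp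
      then show ?thesis using True by simp
    next
      case False
      then have "c j + (d - c' j) < d" "0 < c j + (d - c' j)" using cl[OF j] by simp_all
      then show ?thesis using z by simp
    qed
  qed
  then show ?thesis using Fvec_eqI[OF c c'] unfolding m_def by blast
qed

lemma card_L: "card L = d ^ (n - k)"
proof -
  have Le: "L = (\<lambda>c. lincomb d (n - k) c g) ` Fvec d (n - k)" using L_span by blast
  have "inj_on (\<lambda>c. lincomb d (n - k) c g) (Fvec d (n - k))"
    by (rule inj_onI) (rule lincomb_inj)
  then show ?thesis unfolding Le by (simp add: card_image card_Fvec)
qed

lemma card_Q: "card (vadd d xh ` L) = d ^ (n - k)"
proof -
  have "inj_on (vadd d xh) L"
  proof (rule inj_onI)
    fix a b assume a: "a \<in> L" and b: "b \<in> L" and e: "vadd d xh a = vadd d xh b"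
    have aF: "a \<in> Fvec d (2*n)" and bF: "b \<in> Fvec d (2*n)" using a b L_sub by auto
    have "\<forall>i<2*n. a i = b i"
    proof (intro allI impI)
      fix i assume i: "i < 2*n"
      have "a i < d" "b i < d" using aF bF i unfolding Fvec_def by auto
      moreover have "(xh i + a i) mod d = (xh i + b i) mod d" using fun_cong[OF e, of i] unfolding vadd_def .
      ultimately show "a i = b i" using mod_shift_inj by blast
    qed
    then show "a = b" using Fvec_eqI[OF aF bF] by blast
  qed
  then show ?thesis by (simp add: card_image card_L)
qed

lemma Q_sub: "vadd d xh ` L \<subseteq> Fvec d (2*n)"
  using vadd_in[OF xh_in] L_sub by blast

lemma fx_sq:
  assumes x: "x \<in> Fvec d (2*n)"
  shows "(cmod (fx x))^2 = (if x \<in> vadd d xh ` L then 1 else 0)"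
proof -
  let ?Q = "vadd d xh ` L"
  let ?F = "Fvec d (2*n)"
  define ff where "ff x = (cmod (fx x))^2" for x
  have ffc: "complex_of_real (ff x) = fx x * cnj (fx x)" for x unfolding ff_def by (rule complex_norm_square)
  have hQ: "ff x = 1" if xQ: "x \<in> ?Q" for x
  proof -
    obtain y where yL: "y \<in> L" and xe: "x = vadd d xh y" using xQ by blast
    have "complex_of_real (ff x) = 1" unfolding ffc xe by (rule coset_val[OF yL])
    then show ?thesis by (simp only: of_real_eq_1_iff)
  qed
  have "complex_of_real (\<Sum>x\<in>?F. ff x) = of_nat (d ^ (n - k))"
    by (simp only: of_real_sum ffc sum_all)
  then have "complex_of_real (\<Sum>x\<in>?F. ff x) = complex_of_real (real (d ^ (n - k)))"
    by (simp only: of_real_of_nat_eq)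
  then have hS: "(\<Sum>x\<in>?F. ff x) = real (d ^ (n - k))" by (simp only: of_real_eq_iff)
  have "(\<Sum>x\<in>?Q. ff x) = (\<Sum>x\<in>?Q. 1)" by (rule sum.cong[OF refl]) (rule hQ)
  then have hQs: "(\<Sum>x\<in>?Q. ff x) = real (d ^ (n - k))" by (simp only: sum_constant card_Q)
  have sp: "(\<Sum>x\<in>?F. ff x) = (\<Sum>x\<in>?F - ?Q. ff x) + (\<Sum>x\<in>?Q. ff x)"
    by (rule sum.subset_diff[OF Q_sub finite_Fvec])
  have z: "(\<Sum>x\<in>?F - ?Q. ff x) = 0" using sp hS hQs by linarith
  have nn: "\<And>x. x \<in> ?F - ?Q \<Longrightarrow> 0 \<le> ff x" unfolding ff_def by simp
  have "((\<Sum>x\<in>?F - ?Q. ff x) = 0) = (\<forall>x\<in>?F - ?Q. ff x = 0)"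
    by (rule sum_nonneg_eq_0_iff[OF finite_Diff[OF finite_Fvec] nn])
  then have zz: "\<forall>x\<in>?F - ?Q. ff x = 0" using z by simp
  show ?thesis
  proof (cases "x \<in> ?Q")
    case True then show ?thesis using hQ[OF True] unfolding ff_def by simp
  next
    case False
    then have "ff x = 0" using zz x by blast
    then show ?thesis using False unfolding ff_def by simp
  qed
qed

end

lemma opmul_assoc: "opmul I (opmul I A B) C = opmul I A (opmul I B C)"
proof (intro ext)
  fix r c
  have "opmul I (opmul I A B) C r c = (\<Sum>j\<in>I. \<Sum>m\<in>I. A r m * B m j * C j c)"
    unfolding opmul_def by (simp add: sum_distrib_right)
  also have "\<dots> = (\<Sum>m\<in>I. \<Sum>j\<in>I. A r m * B m j * C j c)" by (rule sum.swap)
  also have "\<dots> = opmul I A (opmul I B C) r c"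
    unfolding opmul_def by (simp add: sum_distrib_left mult.assoc)
  finally show "opmul I (opmul I A B) C r c = opmul I A (opmul I B C) r c" .
qed

lemma adj_opmul: "adj (opmul I A B) = opmul I (adj B) (adj A)"
  unfolding adj_def opmul_def by (intro ext) (simp add: mult.commute)

lemma adj_opscale: "adj (opscale c A) = opscale (cnj c) (adj A)"
  unfolding adj_def opscale_def by simp

lemma opscale_l: "opmul I (opscale c A) B = opscale c (opmul I A B)"
  unfolding opscale_def opmul_def by (intro ext) (simp add: sum_distrib_left mult.assoc)

lemma opscale_r: "opmul I A (opscale c B) = opscale c (opmul I A B)"
  unfolding opscale_def opmul_def by (intro ext) (simp add: sum_distrib_left mult_ac)

lemma opscale_opscale: "opscale a (opscale b A) = opscale (a * b) A"
  unfolding opscale_def by (simp add: mult.assoc)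

lemma opmul_sum_r: "opmul I A (\<lambda>r c. \<Sum>x\<in>X. F x r c) = (\<lambda>r c. \<Sum>x\<in>X. opmul I A (F x) r c)"
proof (intro ext)
  fix r c
  show "opmul I A (\<lambda>r c. \<Sum>x\<in>X. F x r c) r c = (\<Sum>x\<in>X. opmul I A (F x) r c)"
    unfolding opmul_def by (simp add: sum_distrib_left sum.swap[of _ I X])
qed

lemma opmul_sum_l: "opmul I (\<lambda>r c. \<Sum>x\<in>X. F x r c) B = (\<lambda>r c. \<Sum>x\<in>X. opmul I (F x) B r c)"
proof (intro ext)
  fix r c
  show "opmul I (\<lambda>r c. \<Sum>x\<in>X. F x r c) B r c = (\<Sum>x\<in>X. opmul I (F x) B r c)"
    unfolding opmul_def by (simp add: sum_distrib_right sum.swap[of _ I X])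
qed

lemma kraus_R:
  fixes R :: "'i \<Rightarrow> 'i \<Rightarrow> complex" and N :: "'x \<Rightarrow> 'i \<Rightarrow> 'i \<Rightarrow> complex" and w :: "'x \<Rightarrow> real"
  assumes X: "finite X" and w: "\<And>x. x \<in> X \<Longrightarrow> w x \<ge> 0"
  shows "has_kraus I (\<lambda>\<sigma>. opmul I (opmul I R (\<lambda>r c. \<Sum>x\<in>X. complex_of_real (w x) *
              opmul I (opmul I (N x) \<sigma>) (adj (N x)) r c)) (adj R))
           (\<lambda>x. opscale (complex_of_real (sqrt (w x))) (opmul I R (N x))) X"
  unfolding has_kraus_def op_eq_on_def
proof (intro conjI X allI ballI)
  fix \<sigma> :: "'i \<Rightarrow> 'i \<Rightarrow> complex" and r c
  define M where "M x = opmul I (opmul I (N x) \<sigma>) (adj (N x))" for x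
  have ch: "(\<lambda>r c. \<Sum>x\<in>X. complex_of_real (w x) * opmul I (opmul I (N x) \<sigma>) (adj (N x)) r c)
      = (\<lambda>r c. \<Sum>x\<in>X. opscale (complex_of_real (w x)) (M x) r c)"
    unfolding M_def opscale_def by simp
  have t: "opmul I (opmul I (opscale (complex_of_real (sqrt (w x))) (opmul I R (N x))) \<sigma>)
             (adj (opscale (complex_of_real (sqrt (w x))) (opmul I R (N x))))
         = opscale (complex_of_real (w x)) (opmul I (opmul I R (M x)) (adj R))" if x: "x \<in> X" for x
  proof -
    have sq: "cnj (complex_of_real (sqrt (w x))) * complex_of_real (sqrt (w x)) = complex_of_real (w x)"
      using w[OF x] by (simp flip: of_real_mult)
    have "opmul I (opmul I (opmul I R (N x)) \<sigma>) (adj (opmul I R (N x))) = opmul I (opmul I R (M x)) (adj R)"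
      unfolding M_def adj_opmul by (simp only: opmul_assoc)
    then show ?thesis
      by (simp only: adj_opscale opscale_l opscale_r opscale_opscale sq)
  qed
  have "opmul I (opmul I R (\<lambda>r c. \<Sum>x\<in>X. opscale (complex_of_real (w x)) (M x) r c)) (adj R)
      = (\<lambda>r c. \<Sum>x\<in>X. opscale (complex_of_real (w x)) (opmul I (opmul I R (M x)) (adj R)) r c)"
    by (simp only: opmul_sum_r opmul_sum_l opscale_l opscale_r)
  then show "opmul I (opmul I R (\<lambda>r c. \<Sum>x\<in>X. complex_of_real (w x) * opmul I (opmul I (N x) \<sigma>) (adj (N x)) r c)) (adj R) r c
      = (\<Sum>x\<in>X. opmul I (opmul I (opscale (complex_of_real (sqrt (w x))) (opmul I R (N x))) \<sigma>)
             (adj (opscale (complex_of_real (sqrt (w x))) (opmul I R (N x)))) r c)"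
    unfolding ch using t by simp
qed

theorem lemma2:
  fixes d n k :: nat and \<omega> :: complex
    and L :: "(nat \<Rightarrow> nat) set"
    and g h :: "nat \<Rightarrow> nat \<Rightarrow> nat"
    and \<psi>0 :: "(nat \<Rightarrow> nat) \<Rightarrow> complex"
    and xhat :: "(nat \<Rightarrow> nat) \<Rightarrow> (nat \<Rightarrow> nat)"
    and P :: "(nat \<Rightarrow> nat) \<Rightarrow> real"
    and s t :: "nat \<Rightarrow> nat"
    and K :: "'j \<Rightarrow> (nat \<Rightarrow> nat) op" and J :: "'j set"
  assumes d_prime: "prime d"
    and omega_root: "\<omega> ^ d = 1"
    and omega_prim: "\<forall>j. 0 < j \<and> j < d \<longrightarrow> \<omega> ^ j \<noteq> 1"
    and n_pos: "n \<ge> 1"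
    and k_le: "k \<le> n"
    and L_sub: "L \<subseteq> Fvec d (2*n)"
    and L_zero: "(\<lambda>_. 0) \<in> L"
    and L_add: "\<forall>x\<in>L. \<forall>y\<in>L. vadd d x y \<in> L"
    and L_smul: "\<forall>a<d. \<forall>x\<in>L. vsmul d a x \<in> L"
    and L_isotropic: "\<forall>x\<in>L. \<forall>y\<in>L. sympl d n x y = 0"
    and gh_vec: "\<forall>i<n. g i \<in> Fvec d (2*n) \<and> h i \<in> Fvec d (2*n)"
    and hyp_gh: "\<forall>i<n. \<forall>j<n. sympl d n (g i) (h j) = (if i = j then 1 else 0)"
    and hyp_gg: "\<forall>i<n. \<forall>j<n. sympl d n (g i) (g j) = 0"
    and hyp_hh: "\<forall>i<n. \<forall>j<n. sympl d n (h i) (h j) = 0"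
    and L_span: "L = {lincomb d (n - k) c g | c. c \<in> Fvec d (n - k)}"
    and L_indep: "\<forall>c\<in>Fvec d (n - k). lincomb d (n - k) c g = (\<lambda>_. 0) \<longrightarrow> c = (\<lambda>_. 0)"
    and psi0_unit: "vinner (Fvec d n) \<psi>0 \<psi>0 = 1"
    and psi0_stab: "\<forall>i<n. \<forall>r\<in>Fvec d n. opapp (Fvec d n) (Pauli d \<omega> n (g i)) \<psi>0 r = \<psi>0 r"
    and xhat_coset: "\<forall>t'\<in>Fvec d (n - k). xhat t' \<in> Fvec d (2*n) \<and>
                        (\<forall>i<n - k. sympl d n (g i) (xhat t') = t' i)"
    and P_nonneg: "\<forall>x\<in>Fvec d (2*n). P x \<ge> 0"
    and P_sum: "(\<Sum>x\<in>Fvec d (2*n). P x) = 1"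
    and s_vec: "s \<in> Fvec d (n - k)"
    and t_vec: "t \<in> Fvec d (n - k)"
    and kraus: "has_kraus (Fvec d n)
                  (\<lambda>\<sigma>. Rmap d \<omega> n k h \<psi>0 xhat s t (chanA d \<omega> n P \<sigma>)) K J"
  shows "Fe (Fvec d n) (opscale (1 / of_nat (d ^ k)) (codeproj d \<omega> n k h \<psi>0 s)) K J
           = (\<Sum>x\<in>vadd d (xhat t) ` L. P x)"
proof -
  interpret C: qcode d \<omega> n k g h \<psi>0 xhat s t L
    by (rule qcode.intro[OF qd.intro[OF d_prime omega_root omega_prim]
          qcode_axioms.intro[OF k_le L_sub gh_vec hyp_gh L_span L_indep psi0_unit psi0_stab xhat_coset s_vec t_vec]])
  let ?I = "Fvec d n"
  let ?F = "Fvec d (2*n)"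
  let ?rho = "opscale (1 / of_nat (d ^ k)) (codeproj d \<omega> n k h \<psi>0 s)"
  let ?R = "Rop d \<omega> n k h \<psi>0 xhat s t"
  define Kp where "Kp x = opscale (complex_of_real (sqrt (P x))) (opmul ?I ?R (Pauli d \<omega> n x))" for x
  have kp: "has_kraus ?I (\<lambda>\<sigma>. Rmap d \<omega> n k h \<psi>0 xhat s t (chanA d \<omega> n P \<sigma>)) Kp ?F"
    unfolding Rmap_def chanA_def Kp_def
    by (rule kraus_R[OF finite_Fvec]) (use P_nonneg in blast)
  have e1: "complex_of_real (Fe ?I ?rho K J) = complex_of_real (Fe ?I ?rho Kp ?F)"
    unfolding Fe_kraus[OF kraus finite_Fvec] Fe_kraus[OF kp finite_Fvec] ..
  then have eq: "Fe ?I ?rho K J = Fe ?I ?rho Kp ?F" by (simp only: of_real_eq_iff)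
  have "Fe ?I ?rho Kp ?F = (\<Sum>x\<in>?F. P x * (cmod (C.fx x))^2)"
    unfolding Fe_def
  proof (rule sum.cong[OF refl])
    fix x assume x: "x \<in> ?F"
    have tr: "tr ?I (opmul ?I ?rho (Kp x)) = complex_of_real (sqrt (P x)) * C.fx x"
      unfolding Kp_def C.fx_def by (rule tr_opscale2)
    have p: "0 \<le> P x" using P_nonneg x by blast
    show "(cmod (tr ?I (opmul ?I ?rho (Kp x))))^2 = P x * (cmod (C.fx x))^2"
      unfolding tr using p by (simp add: norm_mult power_mult_distrib)
  qed
  also have "\<dots> = (\<Sum>x\<in>?F. if x \<in> vadd d (xhat t) ` L then P x else 0)"
    by (rule sum.cong[OF refl]) (simp add: C.fx_sq)
  also have "\<dots> = (\<Sum>x\<in>?F \<inter> vadd d (xhat t) ` L. P x)"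
    by (rule sum.inter_restrict[OF finite_Fvec, symmetric])
  also have "?F \<inter> vadd d (xhat t) ` L = vadd d (xhat t) ` L" using C.Q_sub by blast
  finally show ?thesis using eq by simp
qed

end
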